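(* Let $(\widehat V,\sigma,m)$, $\mathbf{1}$, $V$ and $\operatorname{QS}$ be as in the context, and let $n\ge2$. Let $x\in T^{\le n}(V)$ with $\operatorname{QS}(x)=0$, and write $x=x_1+x_2$ with $x_1\in V^{\otimes n}$ and $x_2\in T^{\le n-1}(V)$. Then $T_n(x_1)=0$, where $T_n=\sum_{s\in\mathfrak{S}_n}T_s$ acts on $V^{\otimes n}$ through $\sigma_i\mapsto\mathrm{id}^{\otimes(i-1)}\otimes\sigma\otimes\mathrm{id}^{\otimes(n-i-1)}$.
   Context: $\mathbb{K}$ is a field; $T^{\le n}(V)=\bigoplus_{k\le n}V^{\otimes k}$. $\mathfrak{S}_n$ is generated by $s_i=(i,i+1)$; products are composed so that $(\sigma\tau)(x)=\tau(\sigma(x))$. Matsumoto–Tits section: for $s=s_{i_1}\cdots s_{i_l}$ reduced, $T_s=\sigma_{i_1}\cdots\sigma_{i_l}$ (independent of the choice). For $p,q\ge1$, $l\ge0$, $l+p+q\le n$: $\mathfrak{S}^{\uparrow l}_{p,q}$ is the set of $\sigma\in\mathfrak{S}_n$ fixing every $x\notin\{l+1,\dots,l+p+q\}$ with $\sigma^{-1}(l+1)<\cdots<\sigma^{-1}(l+p)$ and $\sigma^{-1}(l+p+1)<\cdots<\sigma^{-1}(l+p+q)$. Bubble decomposition: every $\sigma\in\mathfrak{S}_n$ factors uniquely as $\sigma^{(n-1)}\cdots\sigma^{(1)}$ with $\sigma^{(k)}\in\{e,s_k,s_{k-1}s_k,\dots,s_1\cdots s_k\}$; $t_k(\sigma)=t$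 if $\sigma^{(k)}=s_t\cdots s_k$, $0$ if $\sigma^{(k)}=e$, $t_n(\sigma)=0$. $\operatorname{GVB}_n^+$: monoid on $\sigma_i,\xi_i$ ($1\le i\le n-1$) with relations: for $|i-j|>1$, $\sigma_i\sigma_j=\sigma_j\sigma_i$, $\sigma_i\xi_j=\xi_j\sigma_i$, $\xi_i\xi_j=\xi_j\xi_i$; for $1\le i\le n-2$, $\sigma_i\sigma_{i+1}\sigma_i=\sigma_{i+1}\sigma_i\sigma_{i+1}$, $\xi_i\xi_{i+1}\xi_i=\xi_{i+1}\xi_i\xi_{i+1}$, $\xi_i\sigma_{i+1}\sigma_i=\sigma_{i+1}\sigma_i\xi_{i+1}$, $\xi_{i+1}\sigma_i\sigma_{i+1}=\sigma_i\sigma_{i+1}\xi_i$. $l_v(\tau)$ = number of $\xi$-letters in a word for $\tau$. $F(\sigma)=\prod_{k=n-1,\dots,1;\ \sigma^{(k)}\neq e}(\sigma_{t_k}+(1-\delta_{t_k+1,t_{k+1}})\sigma_1\cdots\sigma_{t_k-1}\xi_{t_k})\sigma_{t_k+1}\cdots\sigma_k$ ($t_k=t_k(\sigma)$, $k$ decreasing left to right, empty products $=e$). $\mathbf{M}_{p,q}(\sigma,\tau)=F(\sigma)\tau$ if $p-l_v(\tau)>0$ and $\sigma\in\mathfrak{S}^{\uparrow l_v(\tau)}_{p-l_v(\tau),q}$, else $0$ (linear in $\tau$); $\mathbf{M}_{p,q}(\sigma)=\mathbf{M}_{p,q}(\sigma,e)$. $Q(\sigma)=\mathbf{M}_{n-1,1}(\sigma^{(n-1)},\mathbf{M}_{n-2,1}(\sigma^{(n-2)},\dots,\mathbf{M}_{1,1}(\sigma^{(1)})\cdots))$,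 $Q_n=\sum_{\sigma\in\mathfrak{S}_n}Q(\sigma)$ ($Q_0=Q_1=e$). Braided algebra $(W,\sigma,m)$: linear $\sigma$ on $W\otimes W$ satisfying $(\sigma\otimes\mathrm{id})(\mathrm{id}\otimes\sigma)(\sigma\otimes\mathrm{id})=(\mathrm{id}\otimes\sigma)(\sigma\otimes\mathrm{id})(\mathrm{id}\otimes\sigma)$, associative $m$, $\sigma(\mathrm{id}\otimes m)=(m\otimes\mathrm{id})(\mathrm{id}\otimes\sigma)(\sigma\otimes\mathrm{id})$, $\sigma(m\otimes\mathrm{id})=(\mathrm{id}\otimes m)(\sigma\otimes\mathrm{id})(\mathrm{id}\otimes\sigma)$. Setting: $(\widehat V,\sigma,m)$ braided algebra, $\mathbf{1}\in\widehat V$, $V$ a complement of $\mathbb{K}\mathbf{1}$, $m(\mathbf{1}\otimes v)=m(v\otimes\mathbf{1})=v$, $\sigma(\mathbf{1}\otimes v)=v\otimes\mathbf{1}$, $\sigma(v\otimes\mathbf{1})=\mathbf{1}\otimes v$ for $v\in\widehat V$, and $\sigma,m$ restrict to a braided algebra on $V$. $\sigma^m(v\otimes w)=\mathbf{1}\otimes m(v\otimes w)$; $\mathbb{K}[\operatorname{GVB}_n^+]$ acts on $\widehat V^{\otimes n}$ via $\sigma_i\mapsto\mathrm{id}^{\otimes(i-1)}\otimes\sigma\otimes\mathrm{id}^{\otimes(n-i-1)}$, $\xi_i\mapsto\mathrm{id}^{\otimes(i-1)}\otimes\sigma^m\otimes\mathrm{id}^{\otimes(n-i-1)}$. $\mathbf{D}:T(\widehat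 V)\to T(V)$ deletes all factors $\mathbf{1}$ from pure tensors with factors in $V\cup\{\mathbf{1}\}$. $\operatorname{QS}_n=\mathbf{D}\circ Q_n:V^{\otimes n}\to T^{\le n}(V)$ and $\operatorname{QS}=\sum_{n\ge0}\operatorname{QS}_n\in\operatorname{End}(T(V))$. *)

theory Defs
  imports "HOL-Combinatorics.Permutations"
begin

(* V has basis indexed by the type 'b; \<hat>V = V \<oplus> K1 has basis
   'b option (None = the unit 1).  An element of T(\<hat>V) (resp. T(V)) is a
   finitely supported function 'b option list \<Rightarrow> 'k (resp. 'b list \<Rightarrow> 'k):
   the coefficient of each basis pure tensor (word).                   *)

definition delta_vec :: "'a \<Rightarrow> 'a \<Rightarrow> 'k::zero_neq_one" where
  "delta_vec w = (\<lambda>v. if v = w then 1 else 0)"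

definition lin_ext :: "('a \<Rightarrow> 'c \<Rightarrow> 'k::comm_semiring_1) \<Rightarrow> ('a \<Rightarrow> 'k) \<Rightarrow> 'c \<Rightarrow> 'k" where
  "lin_ext f X = (\<lambda>v. \<Sum>w\<in>{w. X w \<noteq> 0}. X w * f w v)"

text \<open>id^(i-1) \<otimes> c \<otimes> id^(...) on words (positions i, i+1, 1-based);
  c p q = coefficient of q in c(p).\<close>
definition pos_coef :: "nat \<Rightarrow> ('a \<times> 'a \<Rightarrow> 'a \<times> 'a \<Rightarrow> 'k::zero) \<Rightarrow> 'a list \<Rightarrow> 'a list \<Rightarrow> 'k" where
  "pos_coef i c w w' =
     (if 1 \<le> i \<and> i < length w \<and> length w' = length w
         \<and> (\<forall>j<length w. j \<noteq> i - 1 \<and> j \<noteq> i \<longrightarrow> w' ! j = w ! j)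
      then c (w ! (i - 1), w ! i) (w' ! (i - 1), w' ! i) else 0)"

text \<open>id^(i-1) \<otimes> m \<otimes> id^(...) on words (merges positions i, i+1).\<close>
definition mult_coef :: "nat \<Rightarrow> ('a \<times> 'a \<Rightarrow> 'a \<Rightarrow> 'k::zero) \<Rightarrow> 'a list \<Rightarrow> 'a list \<Rightarrow> 'k" where
  "mult_coef i m w w' =
     (if 1 \<le> i \<and> i < length w \<and> length w = Suc (length w')
         \<and> take (i - 1) w' = take (i - 1) w \<and> drop i w' = drop (i + 1) w
      then m (w ! (i - 1), w ! i) (w' ! (i - 1)) else 0)"

text \<open>Braided algebra (\<hat>V, \<sigma>, m) with unit 1 = None, V = span of Some b,
  satisfying the unit conditions and such that \<sigma>, m restrict to V.
  sig p q = coefficient of q in \<sigma>(p); mu p a = coefficient of a in m(p).\<close>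
definition braided_unital_setting ::
  "('b option \<times> 'b option \<Rightarrow> 'b option \<times> 'b option \<Rightarrow> 'k::field)
   \<Rightarrow> ('b option \<times> 'b option \<Rightarrow> 'b option \<Rightarrow> 'k) \<Rightarrow> bool" where
  "braided_unital_setting sig mu \<longleftrightarrow>
     (\<forall>p. finite {q. sig p q \<noteq> 0}) \<and> (\<forall>p. finite {a. mu p a \<noteq> 0}) \<and>
     (\<forall>w. length w = 3 \<longrightarrow>
        lin_ext (pos_coef 1 sig) (lin_ext (pos_coef 2 sig) (lin_ext (pos_coef 1 sig) (delta_vec w)))
      = lin_ext (pos_coef 2 sig) (lin_ext (pos_coef 1 sig) (lin_ext (pos_coef 2 sig) (delta_vec w)))) \<and>
     (\<forall>w. length w = 3 \<longrightarrow>
        lin_ext (mult_coef 1 mu) (lin_ext (mult_coef 1 mu) (delta_vec w))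
      = lin_ext (mult_coef 1 mu) (lin_ext (mult_coef 2 mu) (delta_vec w))) \<and>
     (\<forall>w. length w = 3 \<longrightarrow>
        lin_ext (pos_coef 1 sig) (lin_ext (mult_coef 2 mu) (delta_vec w))
      = lin_ext (mult_coef 1 mu) (lin_ext (pos_coef 2 sig) (lin_ext (pos_coef 1 sig) (delta_vec w)))) \<and>
     (\<forall>w. length w = 3 \<longrightarrow>
        lin_ext (pos_coef 1 sig) (lin_ext (mult_coef 1 mu) (delta_vec w))
      = lin_ext (mult_coef 2 mu) (lin_ext (pos_coef 1 sig) (lin_ext (pos_coef 2 sig) (delta_vec w)))) \<and>
     (\<forall>a. mu (None, a) = delta_vec a \<and> mu (a, None) = delta_vec a) \<and>
     (\<forall>a. sig (None, a) = delta_vec (a, None) \<and> sig (a, None) = delta_vec (None, a)) \<and>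
     (\<forall>a b c d. sig (Some a, Some b) (c, d) \<noteq> 0 \<longrightarrow> c \<noteq> None \<and> d \<noteq> None) \<and>
     (\<forall>a b c. mu (Some a, Some b) c \<noteq> 0 \<longrightarrow> c \<noteq> None)"

text \<open>\<sigma>^m(v \<otimes> w) = 1 \<otimes> m(v \<otimes> w).\<close>
definition sigma_m :: "('b option \<times> 'b option \<Rightarrow> 'b option \<Rightarrow> 'k::zero)
   \<Rightarrow> 'b option \<times> 'b option \<Rightarrow> 'b option \<times> 'b option \<Rightarrow> 'k" where
  "sigma_m mu p q = (if fst q = None then mu p (snd q) else 0)"

(* The monoid GVB_n^+ : elements of K[GVB_n^+] with nonnegative integer
   coefficients are represented as formal sums (lists) of words in the
   generators.  *)

datatype gen = Sg nat | Xi nat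

fun gen_coef :: "('a \<times> 'a \<Rightarrow> 'a \<times> 'a \<Rightarrow> 'k::zero) \<Rightarrow> ('a \<times> 'a \<Rightarrow> 'a \<times> 'a \<Rightarrow> 'k)
                 \<Rightarrow> gen \<Rightarrow> 'a list \<Rightarrow> 'a list \<Rightarrow> 'k" where
  "gen_coef c cx (Sg i) = pos_coef i c"
| "gen_coef c cx (Xi i) = pos_coef i cx"

definition act_word :: "('a \<times> 'a \<Rightarrow> 'a \<times> 'a \<Rightarrow> 'k::comm_semiring_1) \<Rightarrow> ('a \<times> 'a \<Rightarrow> 'a \<times> 'a \<Rightarrow> 'k)
                 \<Rightarrow> gen list \<Rightarrow> ('a list \<Rightarrow> 'k) \<Rightarrow> 'a list \<Rightarrow> 'k" where
  "act_word c cx ws X = foldr (\<lambda>g Y. lin_ext (gen_coef c cx g) Y) ws X"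

definition lv :: "gen list \<Rightarrow> nat" where
  "lv ws = length (filter (\<lambda>g. case g of Xi _ \<Rightarrow> True | Sg _ \<Rightarrow> False) ws)"

definition fmult :: "gen list list \<Rightarrow> gen list list \<Rightarrow> gen list list" where
  "fmult A B = [a @ b. a \<leftarrow> A, b \<leftarrow> B]"

(* Permutations.  Paper product: (\<sigma>\<tau>)(x) = \<tau>(\<sigma>(x)), i.e. \<sigma>\<tau> = \<tau> \<circ> \<sigma>.      *)

definition st :: "nat \<Rightarrow> nat \<Rightarrow> nat" where
  "st i = (\<lambda>x. if x = i then Suc i else if x = Suc i then i else x)"

text \<open>Paper product s_{i1} ... s_{il} of a word of simple transpositions.\<close>
definition permword :: "nat list \<Rightarrow> nat \<Rightarrow> nat" where
  "permword is = fold (\<lambda>i f. st i \<circ> f) is id"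

definition cyc :: "nat \<Rightarrow> nat \<Rightarrow> nat \<Rightarrow> nat" where
  "cyc t k = permword [t..<Suc k]"

definition bfac :: "(nat \<Rightarrow> nat) \<Rightarrow> nat \<Rightarrow> nat \<Rightarrow> nat" where
  "bfac ts k = (if ts k = 0 then id else cyc (ts k) k)"

text \<open>Paper product \<sigma>^(n-1) ... \<sigma>^(1) with \<sigma>^(k) = bfac ts k.\<close>
definition bubble :: "nat \<Rightarrow> (nat \<Rightarrow> nat) \<Rightarrow> nat \<Rightarrow> nat" where
  "bubble n ts = foldr (\<lambda>k f. bfac ts k \<circ> f) [1..<n] id"

definition valid_ts :: "nat \<Rightarrow> (nat \<Rightarrow> nat) \<Rightarrow> bool" where
  "valid_ts n ts \<longleftrightarrow> (\<forall>k. ts k \<noteq> 0 \<longrightarrow> 1 \<le> k \<and> k < n \<and> ts k \<le> k)"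

text \<open>t_k(\<sigma>) for \<sigma> in S_n (0 for k outside 1..n-1; in particular t_n = 0).\<close>
definition tk :: "nat \<Rightarrow> (nat \<Rightarrow> nat) \<Rightarrow> nat \<Rightarrow> nat" where
  "tk n \<sigma> = (THE ts. valid_ts n ts \<and> bubble n ts = \<sigma>)"

definition bcomp :: "nat \<Rightarrow> (nat \<Rightarrow> nat) \<Rightarrow> nat \<Rightarrow> nat \<Rightarrow> nat" where
  "bcomp n \<sigma> k = bfac (tk n \<sigma>) k"

definition Ffac :: "nat \<Rightarrow> (nat \<Rightarrow> nat) \<Rightarrow> nat \<Rightarrow> gen list list" where
  "Ffac n \<sigma> k =
     (let t = tk n \<sigma> k; t' = tk n \<sigma> (Suc k); rest = map Sg [Suc t..<Suc k] in
      if t = 0 then [[]]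
      else if Suc t = t' then [[Sg t] @ rest]
      else [[Sg t] @ rest, map Sg [1..<t] @ [Xi t] @ rest])"

definition Fgvb :: "nat \<Rightarrow> (nat \<Rightarrow> nat) \<Rightarrow> gen list list" where
  "Fgvb n \<sigma> = foldr (\<lambda>k acc. fmult (Ffac n \<sigma> k) acc) (rev [1..<n]) [[]]"

definition shufset :: "nat \<Rightarrow> nat \<Rightarrow> nat \<Rightarrow> nat \<Rightarrow> (nat \<Rightarrow> nat) set" where
  "shufset n l p q = {\<sigma>. \<sigma> permutes {1..n} \<and>
       (\<forall>x. x \<notin> {l+1..l+p+q} \<longrightarrow> \<sigma> x = x) \<and>
       (\<forall>a b. l+1 \<le> a \<and> a < b \<and> b \<le> l+p \<longrightarrow> inv \<sigma> a < inv \<sigma> b) \<and>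
       (\<forall>a b. l+p+1 \<le> a \<and> a < b \<and> b \<le> l+p+q \<longrightarrow> inv \<sigma> a < inv \<sigma> b)}"

definition Mgvb :: "nat \<Rightarrow> nat \<Rightarrow> nat \<Rightarrow> (nat \<Rightarrow> nat) \<Rightarrow> gen list list \<Rightarrow> gen list list" where
  "Mgvb n p q \<sigma> T = concat (map (\<lambda>\<tau>.
      if lv \<tau> < p \<and> \<sigma> \<in> shufset n (lv \<tau>) (p - lv \<tau>) q
      then map (\<lambda>w. w @ \<tau>) (Fgvb n \<sigma>) else []) T)"

fun Qrec :: "nat \<Rightarrow> (nat \<Rightarrow> nat) \<Rightarrow> nat \<Rightarrow> gen list list" where
  "Qrec n \<sigma> 0 = [[]]"
| "Qrec n \<sigma> (Suc k) = Mgvb n (Suc k) 1 (bcomp n \<sigma> (Suc k)) (Qrec n \<sigma> k)"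

definition Qgvb :: "nat \<Rightarrow> (nat \<Rightarrow> nat) \<Rightarrow> gen list list" where
  "Qgvb n \<sigma> = Qrec n \<sigma> (n - 1)"

definition Qact :: "('b option \<times> 'b option \<Rightarrow> 'b option \<times> 'b option \<Rightarrow> 'k::field)
   \<Rightarrow> ('b option \<times> 'b option \<Rightarrow> 'b option \<Rightarrow> 'k) \<Rightarrow> nat
   \<Rightarrow> ('b option list \<Rightarrow> 'k) \<Rightarrow> 'b option list \<Rightarrow> 'k" where
  "Qact sig mu n X = (\<lambda>v. \<Sum>\<sigma>\<in>{\<sigma>. \<sigma> permutes {1..n}}.
       sum_list (map (\<lambda>\<tau>. act_word sig (sigma_m mu) \<tau> X v) (Qgvb n \<sigma>)))"

definition iota :: "('b list \<Rightarrow> 'k::zero) \<Rightarrow> 'b option list \<Rightarrow> 'k" where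
  "iota x = (\<lambda>w. if None \<notin> set w then x (map the w) else 0)"

definition Ddel :: "('b option list \<Rightarrow> 'k::comm_monoid_add) \<Rightarrow> 'b list \<Rightarrow> 'k" where
  "Ddel X = (\<lambda>v. \<Sum>w\<in>{w. X w \<noteq> 0 \<and> map the (filter (\<lambda>a. a \<noteq> None) w) = v}. X w)"

definition deg :: "nat \<Rightarrow> ('a list \<Rightarrow> 'k::zero) \<Rightarrow> 'a list \<Rightarrow> 'k" where
  "deg k x = (\<lambda>w. if length w = k then x w else 0)"

definition QSn :: "('b option \<times> 'b option \<Rightarrow> 'b option \<times> 'b option \<Rightarrow> 'k::field)
   \<Rightarrow> ('b option \<times> 'b option \<Rightarrow> 'b option \<Rightarrow> 'k) \<Rightarrow> nat \<Rightarrow> ('b list \<Rightarrow> 'k) \<Rightarrow> 'b list \<Rightarrow> 'k" where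
  "QSn sig mu n x = Ddel (Qact sig mu n (iota x))"

definition QS :: "('b option \<times> 'b option \<Rightarrow> 'b option \<times> 'b option \<Rightarrow> 'k::field)
   \<Rightarrow> ('b option \<times> 'b option \<Rightarrow> 'b option \<Rightarrow> 'k) \<Rightarrow> ('b list \<Rightarrow> 'k) \<Rightarrow> 'b list \<Rightarrow> 'k" where
  "QS sig mu x = (\<lambda>v. \<Sum>k\<in>length ` {w. x w \<noteq> 0}. QSn sig mu k (deg k x) v)"

definition reduced_word :: "nat \<Rightarrow> (nat \<Rightarrow> nat) \<Rightarrow> nat list \<Rightarrow> bool" where
  "reduced_word n s is \<longleftrightarrow> set is \<subseteq> {1..<n} \<and> permword is = s \<and>
     (\<forall>js. set js \<subseteq> {1..<n} \<and> permword js = s \<longrightarrow> length is \<le> length js)"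

definition sigV :: "('b option \<times> 'b option \<Rightarrow> 'b option \<times> 'b option \<Rightarrow> 'k)
   \<Rightarrow> 'b \<times> 'b \<Rightarrow> 'b \<times> 'b \<Rightarrow> 'k" where
  "sigV sig p q = sig (Some (fst p), Some (snd p)) (Some (fst q), Some (snd q))"

definition Tn :: "('b option \<times> 'b option \<Rightarrow> 'b option \<times> 'b option \<Rightarrow> 'k::field)
   \<Rightarrow> nat \<Rightarrow> ('b list \<Rightarrow> 'k) \<Rightarrow> 'b list \<Rightarrow> 'k" where
  "Tn sig n x = (\<lambda>v. \<Sum>s\<in>{s. s permutes {1..n}}.
       act_word (sigV sig) (\<lambda>_ _. 0) (map Sg (SOME is. reduced_word n s is)) x v)"

end

theory Submission
  imports Defs
begin


section \<open>Words and permutations\<close>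

lemma fold_st_comp: "fold (\<lambda>i f. st i \<circ> f) ws (g::nat\<Rightarrow>nat) = fold (\<lambda>i f. st i \<circ> f) ws id \<circ> g"
proof (induction ws arbitrary: g)
  case Nil then show ?case by simp
next
  case (Cons i ws)
  have "fold (\<lambda>i f. st i \<circ> f) (i # ws) g = fold (\<lambda>i f. st i \<circ> f) ws (st i \<circ> g)" by simp
  also have "\<dots> = fold (\<lambda>i f. st i \<circ> f) ws id \<circ> (st i \<circ> g)" by (rule Cons)
  also have "\<dots> = (fold (\<lambda>i f. st i \<circ> f) ws id \<circ> st i) \<circ> g" by (simp only: comp_assoc)
  also have "fold (\<lambda>i f. st i \<circ> f) ws id \<circ> st i = fold (\<lambda>i f. st i \<circ> f) ws (st i)" by (rule Cons[symmetric])
  also have "fold (\<lambda>i f. st i \<circ> f) ws (st i) = fold (\<lambda>i f. st i \<circ> f) (i # ws) id" by simp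
  finally show ?case .
qed

lemma permword_Nil[simp]: "permword [] = id" by (simp add: permword_def)

lemma permword_append: "permword (a @ b) = permword b \<circ> permword a"
  unfolding permword_def by (simp add: fold_st_comp[of b "fold (\<lambda>i f. st i \<circ> f) a id"])

lemma permword_Cons: "permword (i # w) = permword w \<circ> st i"
  using permword_append[of "[i]" w] by (simp add: permword_def)

lemma st_st: "st i \<circ> st i = id" by (auto simp: st_def fun_eq_iff)

lemma st_transpose: "st i = transpose i (Suc i)"
  by (auto simp: st_def transpose_def fun_eq_iff)

lemma st_permutes: "1 \<le> i \<Longrightarrow> i < N \<Longrightarrow> st i permutes {1..N}"
  unfolding st_transpose by (rule permutes_swap_id) auto

lemma permword_permutes: "set w \<subseteq> {1..<N} \<Longrightarrow> permword w permutes {1..N}"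
proof (induction w)
  case Nil then show ?case by (simp only: permword_Nil permutes_id)
next
  case (Cons i w)
  have "st i permutes {1..N}" using Cons.prems by (intro st_permutes) auto
  moreover have "permword w permutes {1..N}" using Cons by auto
  ultimately show ?case unfolding permword_Cons by (rule permutes_compose)
qed

definition blk :: "(nat \<Rightarrow> nat) \<Rightarrow> nat \<Rightarrow> nat list" where
  "blk ts k = (if ts k = 0 then [] else [ts k..<Suc k])"

definition bw :: "nat \<Rightarrow> (nat \<Rightarrow> nat) \<Rightarrow> nat list" where
  "bw n ts = concat (map (blk ts) (rev [1..<n]))"

lemma bw_Suc: "1 \<le> k \<Longrightarrow> bw (Suc k) ts = blk ts k @ bw k ts"
  by (simp add: bw_def)

lemma bw_le1: "n \<le> 1 \<Longrightarrow> bw n ts = []"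
  by (simp add: bw_def)

lemma bw_cong: "(\<And>j. 1 \<le> j \<Longrightarrow> j < n \<Longrightarrow> ts j = ts' j) \<Longrightarrow> bw n ts = bw n ts'"
  unfolding bw_def by (intro arg_cong[where f=concat] map_cong) (auto simp: blk_def)

lemma bw_zero: "bw n (\<lambda>_. 0) = []"
  by (simp add: bw_def blk_def)

lemma permword_blk: "permword (blk ts k) = bfac ts k"
  by (simp add: blk_def bfac_def cyc_def)

lemma permword_concat_blk:
  "permword (concat (map (blk ts) (rev ks))) = foldr (\<lambda>k f. bfac ts k \<circ> f) ks id"
  by (induction ks) (simp_all add: permword_append permword_blk)

lemma permword_bw: "permword (bw n ts) = bubble n ts"
  by (simp add: bw_def bubble_def permword_concat_blk)

lemma bw_set: "valid_ts n ts \<Longrightarrow> set (bw n ts) \<subseteq> {1..<n}"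
  unfolding bw_def blk_def valid_ts_def
  by (auto split: if_splits)

lemma bubble_permutes: "valid_ts n ts \<Longrightarrow> bubble n ts permutes {1..n}"
  by (metis permword_bw permword_permutes bw_set)

lemma foldr_bfac_comp: "foldr (\<lambda>k f. bfac ts k \<circ> f) ks g = foldr (\<lambda>k f. bfac ts k \<circ> f) ks id \<circ> g"
  by (induction ks) (simp_all add: comp_assoc)

lemma bubble_Suc: "1 \<le> m \<Longrightarrow> bubble (Suc m) ts = bubble m ts \<circ> bfac ts m"
proof -
  assume "1 \<le> m"
  then have "[1..<Suc m] = [1..<m] @ [m]" by simp
  then show ?thesis unfolding bubble_def
    by (simp add: foldr_bfac_comp[of _ _ "bfac ts m"])
qed

lemma bubble_cong: "(\<And>j. 1 \<le> j \<Longrightarrow> j < n \<Longrightarrow> ts j = ts' j) \<Longrightarrow> bubble n ts = bubble n ts'"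
  by (metis permword_bw bw_cong)

lemma cyc_formula:
  "1 \<le> t \<Longrightarrow> t \<le> Suc K \<Longrightarrow>
   cyc t K x = (if x = t then Suc K else if t < x \<and> x \<le> Suc K then x - 1 else x)"
proof (induction K arbitrary: x)
  case 0
  then have "t = 1" by simp
  then show ?case by (simp add: cyc_def)
next
  case (Suc K)
  show ?case
  proof (cases "t = Suc (Suc K)")
    case True then show ?thesis by (simp add: cyc_def)
  next
    case False
    then have tle: "t \<le> Suc K" using Suc.prems by simp
    then have "[t..<Suc (Suc K)] = [t..<Suc K] @ [Suc K]" by simp
    then have "cyc t (Suc K) = st (Suc K) \<circ> cyc t K"
      by (simp add: cyc_def permword_append permword_def)
    then show ?thesis using Suc.IH[OF Suc.prems(1) tle] tle Suc.prems(1)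
      by (auto simp: st_def)
  qed
qed

lemma cyc_permutes: "1 \<le> t \<Longrightarrow> t \<le> Suc K \<Longrightarrow> Suc K \<le> N \<Longrightarrow> cyc t K permutes {1..N}"
  unfolding cyc_def by (rule permword_permutes) auto

lemma permutes_restrict:
  assumes "\<sigma> permutes {1..Suc m}" "\<sigma> (Suc m) = Suc m"
  shows "\<sigma> permutes {1..m}"
  unfolding permutes_def
proof (intro conjI allI impI)
  fix x assume "x \<notin> {1..m}"
  then show "\<sigma> x = x" using assms
    by (cases "x = Suc m") (auto simp: permutes_def)
next
  fix y show "\<exists>!x. \<sigma> x = y" using assms(1) by (simp add: permutes_def)
qed

lemma valid_zero: "valid_ts n (\<lambda>_. 0)" by (simp add: valid_ts_def)

lemma bubble_zero: "bubble n (\<lambda>_. 0) = id"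
  by (metis permword_bw bw_zero permword_Nil)

lemma valid_small: "n \<le> 1 \<Longrightarrow> valid_ts n ts \<Longrightarrow> ts = (\<lambda>_. 0)"
  by (auto simp: valid_ts_def fun_eq_iff)

lemma valid_mono: "valid_ts m ts \<Longrightarrow> m \<le> n \<Longrightarrow> valid_ts n ts"
  unfolding valid_ts_def by (meson less_le_trans)

lemma bubble_unique:
  "valid_ts n ts1 \<Longrightarrow> valid_ts n ts2 \<Longrightarrow> bubble n ts1 = bubble n ts2 \<Longrightarrow> ts1 = ts2"
proof (induction n arbitrary: ts1 ts2)
  case 0 then show ?case using valid_small[of 0] by auto
next
  case (Suc m)
  show ?case
  proof (cases "m = 0")
    case True then show ?thesis using Suc.prems valid_small[of "Suc m"] by auto
  next
    case False
    then have m1: "1 \<le> m" by simp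
    define r1 where "r1 = bubble m ts1"
    define r2 where "r2 = bubble m ts2"
    have v1: "valid_ts m (ts1(m := 0))" "valid_ts m (ts2(m := 0))"
      using Suc.prems by (auto simp: valid_ts_def less_Suc_eq)
    have r1e: "r1 = bubble m (ts1(m := 0))" unfolding r1_def by (rule bubble_cong) auto
    have r2e: "r2 = bubble m (ts2(m := 0))" unfolding r2_def by (rule bubble_cong) auto
    have p1: "r1 permutes {1..m}" "r2 permutes {1..m}"
      using r1e r2e v1 bubble_permutes by auto
    have fix1: "r1 (Suc m) = Suc m" "r2 (Suc m) = Suc m"
      using p1 by (auto intro: permutes_not_in)
    have inj: "inj r1" "inj r2" using p1 permutes_inj by auto
    define \<sigma> where "\<sigma> = bubble (Suc m) ts1"
    have s1: "\<sigma> = r1 \<circ> bfac ts1 m" "\<sigma> = r2 \<circ> bfac ts2 m"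
      unfolding \<sigma>_def r1_def r2_def using Suc.prems(3) by (simp_all only: bubble_Suc[OF m1])
    have sperm: "\<sigma> permutes {1..Suc m}" unfolding \<sigma>_def using Suc.prems bubble_permutes by auto
    have b_at: "bfac ts m (Suc m) = (if ts m = 0 then Suc m else m)"
      if "valid_ts (Suc m) ts" for ts
    proof (cases "ts m = 0")
      case True then show ?thesis by (simp add: bfac_def)
    next
      case False
      then have "1 \<le> ts m" "ts m \<le> Suc m" "ts m \<le> m" using that[unfolded valid_ts_def, rule_format, of m] by auto
      then show ?thesis using False cyc_formula[of "ts m" m "Suc m"] by (simp add: bfac_def)
    qed
    have b_t: "bfac ts m (ts m) = Suc m"
      if "valid_ts (Suc m) ts" "ts m \<noteq> 0" for ts
    proof -
      have "1 \<le> ts m" "ts m \<le> Suc m" "ts m \<le> m" using that(2) that(1)[unfolded valid_ts_def, rule_format, of m] by auto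
      then show ?thesis using that cyc_formula[of "ts m" m "ts m"] by (simp add: bfac_def)
    qed
    have eqm: "ts1 m = ts2 m"
    proof (cases "ts1 m = 0"; cases "ts2 m = 0")
      assume a: "ts1 m = 0" "ts2 m \<noteq> 0"
      have "\<sigma> (Suc m) = Suc m" using s1(1) a b_at[OF Suc.prems(1)] fix1 by simp
      moreover have "\<sigma> (Suc m) = r2 m" using s1(2) a b_at[OF Suc.prems(2)] by simp
      ultimately have "r2 m = r2 (Suc m)" using fix1 by simp
      then show ?thesis using inj(2) by (simp add: inj_eq)
    next
      assume a: "ts1 m \<noteq> 0" "ts2 m = 0"
      have "\<sigma> (Suc m) = Suc m" using s1(2) a b_at[OF Suc.prems(2)] fix1 by simp
      moreover have "\<sigma> (Suc m) = r1 m" using s1(1) a b_at[OF Suc.prems(1)] by simp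
      ultimately have "r1 m = r1 (Suc m)" using fix1 by simp
      then show ?thesis using inj(1) by (simp add: inj_eq)
    next
      assume a: "ts1 m \<noteq> 0" "ts2 m \<noteq> 0"
      have "\<sigma> (ts1 m) = Suc m" using s1(1) b_t[OF Suc.prems(1) a(1)] fix1 by simp
      moreover have "\<sigma> (ts2 m) = Suc m" using s1(2) b_t[OF Suc.prems(2) a(2)] fix1 by simp
      ultimately show ?thesis using permutes_inj[OF sperm] by (metis injD)
    qed simp
    have "bfac ts1 m = bfac ts2 m" using eqm by (simp add: bfac_def)
    moreover have "surj (bfac ts1 m)"
    proof (cases "ts1 m = 0")
      case True then show ?thesis by (simp add: bfac_def)
    next
      case False
      then have "1 \<le> ts1 m" "ts1 m \<le> Suc m" using Suc.prems(1)[unfolded valid_ts_def, rule_format, of m] by auto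
      then have "cyc (ts1 m) m permutes {1..Suc m}"
        by (intro cyc_permutes) auto
      then show ?thesis using False by (simp add: bfac_def permutes_surj)
    qed
    ultimately have "r1 = r2"
    proof -
      assume be: "bfac ts1 m = bfac ts2 m" and su: "surj (bfac ts1 m)"
      show ?thesis
      proof
        fix x
        obtain y where y: "x = bfac ts1 m y" using su by (metis surjD)
        have "r1 x = \<sigma> y" using s1(1) y by simp
        also have "\<dots> = r2 x" using s1(2) y be by simp
        finally show "r1 x = r2 x" .
      qed
    qed
    then have "bubble m (ts1(m := 0)) = bubble m (ts2(m := 0))" using r1e r2e by simp
    then have "ts1(m := 0) = ts2(m := 0)" by (rule Suc.IH[OF v1])
    then show ?thesis using eqm by (metis fun_upd_triv fun_upd_upd)
  qed
qed

lemma bubble_exists: "\<sigma> permutes {1..n} \<Longrightarrow> \<exists>ts. valid_ts n ts \<and> bubble n ts = \<sigma>"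
proof (induction n arbitrary: \<sigma>)
  case 0
  then have "\<sigma> = id" by simp
  then show ?case using valid_zero[of 0] bubble_zero[of 0] by metis
next
  case (Suc m)
  show ?case
  proof (cases "m = 0")
    case True
    then have "\<sigma> = id" using Suc.prems by simp
    then show ?thesis using valid_zero[of "Suc m"] bubble_zero[of "Suc m"] by metis
  next
    case False
    then have m1: "1 \<le> m" by simp
    define p where "p = inv \<sigma> (Suc m)"
    have sp: "\<sigma> p = Suc m" unfolding p_def using permutes_inverses[OF Suc.prems] by simp
    have pin: "p \<in> {1..Suc m}" unfolding p_def
      using permutes_in_image[OF permutes_inv[OF Suc.prems]] by auto
    show ?thesis
    proof (cases "p = Suc m")
      case True
      then have "\<sigma> permutes {1..m}" using permutes_restrict Suc.prems sp by auto
      then obtain ts where ts: "valid_ts m ts" "bubble m ts = \<sigma>" using Suc.IH by blast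
      have "ts m = 0" using ts(1) by (auto simp: valid_ts_def)
      then have "bubble (Suc m) ts = \<sigma>" using bubble_Suc[OF m1] ts by (simp add: bfac_def)
      moreover have "valid_ts (Suc m) ts" using ts(1) by (rule valid_mono) simp
      ultimately show ?thesis by blast
    next
      case False
      then have p: "1 \<le> p" "p \<le> m" using pin by auto
      define b where "b = cyc p m"
      have bp: "b permutes {1..Suc m}" unfolding b_def using p by (intro cyc_permutes) auto
      have bpv: "b p = Suc m" unfolding b_def using cyc_formula[of p m p] p by simp
      define \<rho> where "\<rho> = \<sigma> \<circ> inv b"
      have rp: "\<rho> permutes {1..Suc m}" unfolding \<rho>_def
        by (intro permutes_compose permutes_inv bp Suc.prems)
      have "inv b (Suc m) = p" using permutes_inverses(2)[OF bp, of p] bpv by simp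
      then have "\<rho> (Suc m) = Suc m" unfolding \<rho>_def using sp by simp
      then have "\<rho> permutes {1..m}" using permutes_restrict rp by auto
      then obtain ts where ts: "valid_ts m ts" "bubble m ts = \<rho>" using Suc.IH by blast
      define ts' where "ts' = ts(m := p)"
      have "valid_ts (Suc m) ts'" unfolding ts'_def valid_ts_def
      proof (intro allI impI)
        fix k assume "(ts(m := p)) k \<noteq> 0"
        then show "1 \<le> k \<and> k < Suc m \<and> (ts(m := p)) k \<le> k"
          using p ts(1)[unfolded valid_ts_def, rule_format, of k] by (cases "k = m") auto
      qed
      moreover have "bubble m ts' = bubble m ts" unfolding ts'_def by (rule bubble_cong) auto
      then have "bubble (Suc m) ts' = \<rho> \<circ> b"
        using bubble_Suc[OF m1] ts p unfolding ts'_def b_def by (simp add: bfac_def)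
      then have "bubble (Suc m) ts' = \<sigma>" unfolding \<rho>_def
        using permutes_inv_o(2)[OF bp] by (simp add: comp_assoc)
      ultimately show ?thesis by blast
    qed
  qed
qed

lemma tk_props: "\<sigma> permutes {1..n} \<Longrightarrow> valid_ts n (tk n \<sigma>) \<and> bubble n (tk n \<sigma>) = \<sigma>"
proof -
  assume p: "\<sigma> permutes {1..n}"
  obtain ts where ts: "valid_ts n ts" "bubble n ts = \<sigma>" using bubble_exists[OF p] by blast
  have ex1: "\<exists>!ts. valid_ts n ts \<and> bubble n ts = \<sigma>"
  proof (rule ex1I[of _ ts])
    show "valid_ts n ts \<and> bubble n ts = \<sigma>" using ts by simp
    fix ts' assume "valid_ts n ts' \<and> bubble n ts' = \<sigma>"
    then show "ts' = ts" using ts bubble_unique[of n ts' ts] by simp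
  qed
  show ?thesis unfolding tk_def by (rule theI'[OF ex1])
qed

lemma tk_bubble: "valid_ts n ts \<Longrightarrow> tk n (bubble n ts) = ts"
  unfolding tk_def by (rule the_equality) (auto intro: bubble_unique)



inductive beq :: "nat \<Rightarrow> nat list \<Rightarrow> nat list \<Rightarrow> bool" for N where
  brefl: "beq N w w"
| bsym: "beq N w v \<Longrightarrow> beq N v w"
| btrans: "beq N u v \<Longrightarrow> beq N v w \<Longrightarrow> beq N u w"
| bcomm: "1 \<le> i \<Longrightarrow> i < N \<Longrightarrow> 1 \<le> j \<Longrightarrow> j < N \<Longrightarrow> i + 2 \<le> j \<Longrightarrow>
          beq N (p @ [i, j] @ q) (p @ [j, i] @ q)"
| bbraid: "1 \<le> i \<Longrightarrow> Suc i < N \<Longrightarrow>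
          beq N (p @ [i, Suc i, i] @ q) (p @ [Suc i, i, Suc i] @ q)"

lemma beq_app: "beq N u v \<Longrightarrow> beq N (p @ u @ q) (p @ v @ q)"
proof (induction rule: beq.induct)
  case (brefl w) then show ?case by (rule beq.brefl)
next
  case (bsym w v) show ?case by (rule beq.bsym[OF bsym.IH])
next
  case (btrans u v w) show ?case by (rule beq.btrans[OF btrans.IH(1) btrans.IH(2)])
next
  case (bcomm i j p' q')
  then show ?case using beq.bcomm[where i=i and j=j and p="p @ p'" and q="q' @ q"] by simp
next
  case (bbraid i p' q')
  then show ?case using beq.bbraid[where i=i and p="p @ p'" and q="q' @ q"] by simp
qed

lemma beq_Cons: "beq N u v \<Longrightarrow> beq N (a # u) (a # v)"
  using beq_app[of N u v "[a]" "[]"] by simp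

lemma beq_appL: "beq N u v \<Longrightarrow> beq N (p @ u) (p @ v)"
  using beq_app[of N u v p "[]"] by simp

lemma beq_appR: "beq N u v \<Longrightarrow> beq N (u @ q) (v @ q)"
  using beq_app[of N u v "[]" q] by simp

lemma st_comm: "i + 2 \<le> j \<Longrightarrow> st i \<circ> st j = st j \<circ> st i"
  by (auto simp: st_def fun_eq_iff)

lemma st_braid: "st i \<circ> st (Suc i) \<circ> st i = st (Suc i) \<circ> st i \<circ> st (Suc i)"
  by (auto simp: st_def fun_eq_iff)

lemma beq_perm: "beq N u v \<Longrightarrow> permword u = permword v"
proof (induction rule: beq.induct)
  case (bcomm i j p q)
  have e: "permword [i, j] = permword [j, i]"
    using st_comm[OF bcomm(5)] by (simp add: permword_def)
  show ?case by (simp only: permword_append e)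
next
  case (bbraid i p q)
  have e: "permword [i, Suc i, i] = permword [Suc i, i, Suc i]"
    using st_braid[of i] by (simp add: permword_def comp_assoc)
  show ?case by (simp only: permword_append e)
qed simp_all

lemma beq_comm_list:
  "(\<forall>y\<in>set ys. 1 \<le> y \<and> y < N \<and> (c + 2 \<le> y \<or> y + 2 \<le> c)) \<Longrightarrow> 1 \<le> c \<Longrightarrow> c < N \<Longrightarrow>
   beq N (c # ys) (ys @ [c])"
proof (induction ys)
  case Nil then show ?case by (simp add: beq.brefl)
next
  case (Cons y ys)
  have "beq N (c # y # ys) (y # c # ys)"
  proof -
    have y: "1 \<le> y" "y < N" "c + 2 \<le> y \<or> y + 2 \<le> c" using Cons.prems by auto
    show ?thesis
    proof (cases "c + 2 \<le> y")
      case True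
      then show ?thesis using beq.bcomm[where i=c and j=y and p="[]" and q=ys] y Cons.prems by simp
    next
      case False
      then have "y + 2 \<le> c" using y by simp
      then show ?thesis using beq.bsym[OF beq.bcomm[where i=y and j=c and p="[]" and q=ys]] y Cons.prems by simp
    qed
  qed
  moreover have "beq N (y # c # ys) (y # ys @ [c])"
    using Cons by (intro beq_Cons) simp
  ultimately show ?case by (simp add: beq.btrans)
qed

lemma beq_block:
  assumes "1 \<le> t" "t < c" "c \<le> k" "k < N"
  shows "beq N (c # [t..<Suc k]) ([t..<Suc k] @ [c - 1])"
proof -
  define A where "A = [t..<c - 1]"
  define C where "C = [Suc c..<Suc k]"
  have dec: "[t..<Suc k] = A @ [c - 1, c] @ C"
  proof -
    have "[t..<Suc k] = [t..<c - 1] @ [c - 1..<Suc k]"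
      using upt_add_eq_append[of t "c - 1" "Suc k - (c - 1)"] assms by simp
    moreover have "[c - 1..<Suc k] = [c - 1, c] @ C" unfolding C_def using assms
      by (simp add: upt_conv_Cons)
    ultimately show ?thesis unfolding A_def by simp
  qed
  have s1: "beq N (c # A) (A @ [c])"
    using assms unfolding A_def by (intro beq_comm_list) auto
  have e1: "beq N (c # A @ [c - 1, c] @ C) (A @ [c, c - 1, c] @ C)"
    using beq_appR[OF s1, of "[c - 1, c] @ C"] by simp
  have e2: "beq N (A @ [c, c - 1, c] @ C) (A @ [c - 1, c, c - 1] @ C)"
    using beq.bsym[OF beq.bbraid[where i="c - 1" and p=A and q=C]] assms by simp
  have "beq N ((c - 1) # C) (C @ [c - 1])"
    using assms unfolding C_def by (intro beq_comm_list) auto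
  then have e3: "beq N (A @ [c - 1, c, c - 1] @ C) (A @ [c - 1, c] @ C @ [c - 1])"
    using beq_appL[of N "(c - 1) # C" "C @ [c - 1]" "A @ [c - 1, c]"] by simp
  have "beq N (c # A @ [c - 1, c] @ C) (A @ [c - 1, c] @ C @ [c - 1])"
    by (rule beq.btrans[OF beq.btrans[OF e1 e2] e3])
  then show ?thesis using dec by simp
qed



definition insP :: "nat \<Rightarrow> nat \<Rightarrow> (nat \<Rightarrow> nat) \<Rightarrow> nat \<Rightarrow> (nat \<Rightarrow> nat) \<Rightarrow> bool" where
  "insP N k ts c ts' \<longleftrightarrow> (\<forall>j. (k < j \<or> j = 0) \<longrightarrow> ts' j = ts j) \<and> (\<forall>j. 1 \<le> j \<longrightarrow> j \<le> k \<longrightarrow> ts' j \<le> j) \<and>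
     ((beq N (c # bw (Suc k) ts) (bw (Suc k) ts') \<and> length (bw (Suc k) ts') = Suc (length (bw (Suc k) ts)))
      \<or> (permword (c # bw (Suc k) ts) = permword (bw (Suc k) ts') \<and> Suc (length (bw (Suc k) ts')) = length (bw (Suc k) ts)))"

lemma ins:
  "k < N \<Longrightarrow> (\<forall>j. 1 \<le> j \<longrightarrow> j \<le> k \<longrightarrow> ts j \<le> j) \<Longrightarrow> 1 \<le> c \<Longrightarrow> c \<le> k \<Longrightarrow> \<exists>ts'. insP N k ts c ts'"
proof (induction k arbitrary: ts c)
  case 0 then show ?case by simp
next
  case (Suc k)
  define K where "K = Suc k"
  have K1: "1 \<le> K" unfolding K_def by simp
  have bwK: "bw (Suc K) ts' = blk ts' K @ bw K ts'" for ts' using bw_Suc[OF K1] .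
  define R where "R = bw K ts"
  have pre2: "\<forall>j. 1 \<le> j \<longrightarrow> j \<le> K \<longrightarrow> ts j \<le> j" using Suc.prems(2) unfolding K_def .
  have tsK: "ts K \<le> K" using Suc.prems(2)[rule_format, of K] K1 unfolding K_def by simp
  have viaIH: "\<exists>ts'. insP N K ts c ts'"
    if B: "beq N (c # blk ts K) (blk ts K @ [c'])" and c': "1 \<le> c'" "c' \<le> k" for c'
  proof -
    have pre: "\<forall>j. 1 \<le> j \<longrightarrow> j \<le> k \<longrightarrow> ts j \<le> j" using Suc.prems(2) by simp
    obtain ts'' where h: "insP N k ts c' ts''" using Suc.IH[OF _ pre c'] Suc.prems(1) by auto
    have same: "(k < j \<or> j = 0) \<Longrightarrow> ts'' j = ts j" for j using h unfolding insP_def by blast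
    have sK: "ts'' K = ts K" using same[of K] unfolding K_def by simp
    have bK: "blk ts'' K = blk ts K" by (simp add: blk_def sK)
    have Rk: "bw (Suc k) = bw K" unfolding K_def ..
    have c1: "\<forall>j. (K < j \<or> j = 0) \<longrightarrow> ts'' j = ts j" using same unfolding K_def by auto
    have c2: "\<forall>j. 1 \<le> j \<longrightarrow> j \<le> K \<longrightarrow> ts'' j \<le> j"
    proof (intro allI impI)
      fix j assume "1 \<le> j" "j \<le> K"
      then show "ts'' j \<le> j"
        using h sK tsK unfolding insP_def K_def by (cases "j = Suc k") auto
    qed
    have e1: "beq N (c # blk ts K @ R) (blk ts K @ c' # R)"
      using beq_appR[OF B, of R] by simp
    have disj: "(beq N (c' # R) (bw K ts'') \<and> length (bw K ts'') = Suc (length R)) \<or>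
          (permword (c' # R) = permword (bw K ts'') \<and> Suc (length (bw K ts'')) = length R)"
      using h unfolding insP_def R_def Rk by blast
    show ?thesis
    proof (rule exI[of _ ts''])
      show "insP N K ts c ts''" unfolding insP_def
      proof (intro conjI c1 c2)
        show "(beq N (c # bw (Suc K) ts) (bw (Suc K) ts'') \<and>
            length (bw (Suc K) ts'') = Suc (length (bw (Suc K) ts))) \<or>
           (permword (c # bw (Suc K) ts) = permword (bw (Suc K) ts'') \<and>
            Suc (length (bw (Suc K) ts'')) = length (bw (Suc K) ts))"
        proof (cases "beq N (c' # R) (bw K ts'') \<and> length (bw K ts'') = Suc (length R)")
          case True
          then have "beq N (blk ts K @ c' # R) (blk ts K @ bw K ts'')" by (intro beq_appL) simp
          then have "beq N (c # blk ts K @ R) (blk ts K @ bw K ts'')" using e1 by (rule beq.btrans[rotated])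
          then show ?thesis using True by (simp add: bwK bK R_def)
        next
          case False
          then have pw: "permword (c' # R) = permword (bw K ts'')" and ln: "Suc (length (bw K ts'')) = length R"
            using disj by auto
          have "permword (c # blk ts K @ R) = permword (blk ts K @ c' # R)" using beq_perm[OF e1] by simp
          also have "\<dots> = permword (blk ts K @ bw K ts'')" by (simp add: permword_append pw)
          finally show ?thesis using ln by (simp add: bwK bK R_def)
        qed
      qed
    qed
  qed
  have main: "\<exists>ts'. insP N K ts c ts'"
  proof (cases "ts K = 0")
    case True
    show ?thesis
    proof (cases "c = K")
      case cK: True
      define ts' where "ts' = ts(K := K)"
      have b1: "blk ts' K = [K]" by (simp add: ts'_def blk_def K_def)
      have b2: "bw K ts' = bw K ts" unfolding ts'_def by (rule bw_cong) auto
      have b0: "blk ts K = []" using True by (simp add: blk_def)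
      have "bw (Suc K) ts' = c # bw (Suc K) ts"
        by (simp only: bwK b1 b2 b0 cK) simp
      then have "insP N K ts c ts'" unfolding insP_def ts'_def using pre2 K1
        by (auto simp: beq.brefl)
      then show ?thesis by blast
    next
      case cK: False
      then have "c \<le> k" using Suc.prems(4) unfolding K_def by simp
      have "blk ts K = []" using True by (simp add: blk_def)
      then have "beq N (c # blk ts K) (blk ts K @ [c])" by (simp add: beq.brefl)
      then show ?thesis using viaIH Suc.prems(3) \<open>c \<le> k\<close> by blast
    qed
  next
    case False
    define t where "t = ts K"
    have t1: "1 \<le> t" "t \<le> K" using False tsK unfolding t_def by auto
    have blkK: "blk ts K = [t..<Suc K]" using False by (simp add: blk_def t_def)
    have KN: "K < N" using Suc.prems(1) unfolding K_def .
    consider "c + 2 \<le> t" | "c + 1 = t" | "c = t" | "t < c" by linarith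
    then show ?thesis
    proof cases
      case 1
      have "beq N (c # blk ts K) (blk ts K @ [c])" unfolding blkK
        using t1 KN 1 Suc.prems(3) by (intro beq_comm_list) auto
      moreover have "c \<le> k" using 1 t1 unfolding K_def by simp
      ultimately show ?thesis using viaIH Suc.prems(3) by blast
    next
      case 2
      define ts' where "ts' = ts(K := c)"
      have b1: "blk ts' K = c # [t..<Suc K]" using 2 t1 Suc.prems(3)
        by (simp add: ts'_def blk_def upt_conv_Cons)
      have b2: "bw K ts' = bw K ts" unfolding ts'_def by (rule bw_cong) auto
      have "bw (Suc K) ts' = c # bw (Suc K) ts"
        by (simp add: bwK b1 b2 blkK)
      moreover have "c \<le> K" using 2 t1 by simp
      ultimately have "insP N K ts c ts'" unfolding insP_def ts'_def using pre2 K1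
        by (auto simp: beq.brefl)
      then show ?thesis by blast
    next
      case 3
      define ts' where "ts' = ts(K := (if t = K then 0 else Suc t))"
      have b1: "blk ts' K = [Suc t..<Suc K]" by (simp add: ts'_def blk_def)
      have b0: "blk ts K = t # [Suc t..<Suc K]" using blkK t1 by (simp add: upt_conv_Cons)
      have b2: "bw K ts' = bw K ts" unfolding ts'_def by (rule bw_cong) auto
      have "permword (c # bw (Suc K) ts) = permword (bw (Suc K) ts')"
        using 3 by (simp add: bwK b0 b1 b2 permword_Cons permword_append comp_assoc st_st)
      moreover have "Suc (length (bw (Suc K) ts')) = length (bw (Suc K) ts)"
        by (simp add: bwK b0 b1 b2)
      moreover have "\<forall>j. 1 \<le> j \<longrightarrow> j \<le> K \<longrightarrow> ts' j \<le> j"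
        using pre2 t1 unfolding ts'_def by auto
      moreover have "\<forall>j. (K < j \<or> j = 0) \<longrightarrow> ts' j = ts j" unfolding ts'_def using K1 by auto
      ultimately have "insP N K ts c ts'" unfolding insP_def by blast
      then show ?thesis by blast
    next
      case 4
      have "beq N (c # blk ts K) (blk ts K @ [c - 1])" unfolding blkK
        using t1 KN 4 Suc.prems(4) unfolding K_def by (intro beq_block) auto
      moreover have "c - 1 \<le> k" "1 \<le> c - 1" using 4 t1 Suc.prems(4) unfolding K_def by auto
      ultimately show ?thesis using viaIH by blast
    qed
  qed
  then show ?case unfolding K_def .
qed

lemma reduce:
  "set w \<subseteq> {1..<n} \<Longrightarrow> \<exists>ts. valid_ts n ts \<and> permword w = permword (bw n ts) \<and>
     length (bw n ts) \<le> length w \<and> (length (bw n ts) = length w \<longrightarrow> beq n w (bw n ts))"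
proof (induction w)
  case Nil
  show ?case by (rule exI[of _ "\<lambda>_. 0"]) (simp add: valid_zero bw_zero beq.brefl)
next
  case (Cons i w)
  then obtain ts0 where h: "valid_ts n ts0" "permword w = permword (bw n ts0)"
    "length (bw n ts0) \<le> length w" "length (bw n ts0) = length w \<longrightarrow> beq n w (bw n ts0)" by auto
  have i: "1 \<le> i" "i < n" using Cons.prems by auto
  have pre: "\<forall>j. 1 \<le> j \<longrightarrow> j \<le> n - 1 \<longrightarrow> ts0 j \<le> j"
    using h(1) unfolding valid_ts_def by (metis not_le_imp_less not_one_le_zero le0 order.strict_iff_not)
  have "i \<le> n - 1" "n - 1 < n" using i by auto
  then obtain ts' where t': "insP n (n - 1) ts0 i ts'" using ins[OF _ pre i(1)] by blast
  have nn: "Suc (n - 1) = n" using i by simp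
  have valid: "valid_ts n ts'" unfolding valid_ts_def
  proof (intro allI impI)
    fix j assume "ts' j \<noteq> 0"
    show "1 \<le> j \<and> j < n \<and> ts' j \<le> j"
    proof (cases "n - 1 < j \<or> j = 0")
      case True
      then have "ts' j = ts0 j" using t' unfolding insP_def by blast
      then show ?thesis using \<open>ts' j \<noteq> 0\<close> h(1) unfolding valid_ts_def by auto
    next
      case False
      then show ?thesis using t' unfolding insP_def by auto
    qed
  qed
  have disj: "(beq n (i # bw n ts0) (bw n ts') \<and> length (bw n ts') = Suc (length (bw n ts0))) \<or>
     (permword (i # bw n ts0) = permword (bw n ts') \<and> Suc (length (bw n ts')) = length (bw n ts0))"
    using t' unfolding insP_def nn by blast
  have pw: "permword (i # w) = permword (i # bw n ts0)" by (simp add: permword_Cons h(2))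
  show ?case
  proof (rule exI[of _ ts'], intro conjI valid)
    show "permword (i # w) = permword (bw n ts')" using disj pw beq_perm by auto
    show "length (bw n ts') \<le> length (i # w)" using disj h(3) by auto
    show "length (bw n ts') = length (i # w) \<longrightarrow> beq n (i # w) (bw n ts')"
    proof
      assume l: "length (bw n ts') = length (i # w)"
      then have "length (bw n ts') = Suc (length (bw n ts0))" "beq n (i # bw n ts0) (bw n ts')"
        using disj h(3) by auto
      then have "length (bw n ts0) = length w" using l by simp
      then have "beq n (i # w) (i # bw n ts0)" using h(4) by (simp add: beq_Cons)
      then show "beq n (i # w) (bw n ts')" using \<open>beq n (i # bw n ts0) (bw n ts')\<close> by (rule beq.btrans)
    qed
  qed
qed

lemma reduced_exists:
  assumes "s permutes {1..n}"
  shows "\<exists>w. reduced_word n s w"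
proof -
  obtain ts where ts: "valid_ts n ts" "bubble n ts = s" using bubble_exists[OF assms] by blast
  let ?P = "\<lambda>w. set w \<subseteq> {1..<n} \<and> permword w = s"
  have "?P (bw n ts)" using ts bw_set permword_bw by auto
  then obtain w where "?P w" "\<forall>v. ?P v \<longrightarrow> length w \<le> length v"
    using ex_has_least_nat[of ?P "bw n ts" length] by blast
  then show ?thesis unfolding reduced_word_def by blast
qed

lemma reduced_beq:
  assumes "s permutes {1..n}" "reduced_word n s w"
  shows "beq n w (bw n (tk n s))"
proof -
  have w: "set w \<subseteq> {1..<n}" "permword w = s" using assms(2) unfolding reduced_word_def by auto
  obtain ts where ts: "valid_ts n ts" "permword w = permword (bw n ts)"
    "length (bw n ts) \<le> length w" "length (bw n ts) = length w \<longrightarrow> beq n w (bw n ts)"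
    using reduce[OF w(1)] by blast
  have bs: "bubble n ts = s" using ts(2) w(2) permword_bw by simp
  have "length w \<le> length (bw n ts)" using assms(2) unfolding reduced_word_def
    using bw_set[OF ts(1)] bs permword_bw by auto
  then have "beq n w (bw n ts)" using ts(3,4) by simp
  moreover have "tk n s = ts" using tk_bubble[OF ts(1)] bs by simp
  ultimately show ?thesis by simp
qed



section \<open>Linear algebra of finitely supported vectors\<close>

definition fsupp :: "('a \<Rightarrow> 'k::zero) \<Rightarrow> bool" where
  "fsupp X \<longleftrightarrow> finite {w. X w \<noteq> 0}"

definition rowfin :: "('a \<Rightarrow> 'c \<Rightarrow> 'k::zero) \<Rightarrow> bool" where
  "rowfin f \<longleftrightarrow> (\<forall>w. finite {v. f w v \<noteq> 0})"

lemma lin_ext_eq_sum: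
  fixes X :: "'a \<Rightarrow> 'k::field"
  assumes "finite S" "{w. X w \<noteq> 0} \<subseteq> S"
  shows "lin_ext f X v = (\<Sum>w\<in>S. X w * f w v)"
  unfolding lin_ext_def
  by (rule sum.mono_neutral_left) (use assms in auto)

lemma lin_ext_nz:
  fixes X :: "'a \<Rightarrow> 'k::field"
  shows "lin_ext f X v \<noteq> 0 \<Longrightarrow> \<exists>w. X w \<noteq> 0 \<and> f w v \<noteq> 0"
proof -
  assume "lin_ext f X v \<noteq> 0"
  then have "(\<Sum>w\<in>{w. X w \<noteq> 0}. X w * f w v) \<noteq> 0" unfolding lin_ext_def .
  then obtain w where "w \<in> {w. X w \<noteq> 0}" "X w * f w v \<noteq> 0"
    by (rule sum.not_neutral_contains_not_neutral)
  then show ?thesis by auto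
qed

lemma lin_ext_fsupp:
  fixes X :: "'a \<Rightarrow> 'k::field"
  assumes "rowfin f" "fsupp X"
  shows "fsupp (lin_ext f X)"
proof -
  have sub: "{v. lin_ext f X v \<noteq> 0} \<subseteq> (\<Union>w\<in>{w. X w \<noteq> 0}. {v. f w v \<noteq> 0})"
  proof
    fix v assume "v \<in> {v. lin_ext f X v \<noteq> 0}"
    then have "lin_ext f X v \<noteq> 0" by simp
    then have "\<exists>w. X w \<noteq> 0 \<and> f w v \<noteq> 0" by (rule lin_ext_nz)
    then obtain w where "X w \<noteq> 0" "f w v \<noteq> 0" by (elim exE conjE)
    then show "v \<in> (\<Union>w\<in>{w. X w \<noteq> 0}. {v. f w v \<noteq> 0})" by (intro UN_I) simp_all
  qed
  have fin: "finite (\<Union>w\<in>{w. X w \<noteq> 0}. {v. f w v \<noteq> 0})"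
  proof (rule finite_UN_I)
    show "finite {w. X w \<noteq> 0}" using assms(2) unfolding fsupp_def .
    fix w show "finite {v. f w v \<noteq> 0}" using assms(1) unfolding rowfin_def by simp
  qed
  show ?thesis unfolding fsupp_def by (rule finite_subset[OF sub fin])
qed

lemma delta_fsupp: "fsupp (delta_vec w :: 'a \<Rightarrow> 'k::field)"
proof -
  have "{v. (delta_vec w :: 'a \<Rightarrow> 'k) v \<noteq> 0} = {w}" by (auto simp: delta_vec_def)
  then show ?thesis unfolding fsupp_def by simp
qed

lemma lin_ext_delta:
  "lin_ext f (delta_vec w :: 'a \<Rightarrow> 'k::field) = f w"
proof
  fix v
  have "{u. (delta_vec w :: 'a \<Rightarrow> 'k) u \<noteq> 0} = {w}" by (auto simp: delta_vec_def)
  then show "lin_ext f (delta_vec w :: 'a \<Rightarrow> 'k) v = f w v"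
    unfolding lin_ext_def by (simp add: delta_vec_def)
qed

lemma lin_ext_zero: "lin_ext f (\<lambda>_. 0 :: 'k::field) = (\<lambda>_. 0)"
  unfolding lin_ext_def by simp

lemma lin_ext_cong:
  "(\<And>w. X w \<noteq> 0 \<Longrightarrow> f w = g w) \<Longrightarrow> lin_ext f X = lin_ext g X"
  unfolding lin_ext_def by (intro ext sum.cong) auto

lemma lin_ext_id:
  fixes X :: "'a \<Rightarrow> 'k::field"
  assumes "fsupp X"
  shows "lin_ext delta_vec X = X"
proof
  fix v
  show "lin_ext delta_vec X v = X v"
  proof (cases "X v = 0")
    case True
    have "lin_ext delta_vec X v = 0" unfolding lin_ext_def delta_vec_def
      by (rule sum.neutral) (use True in auto)
    then show ?thesis using True by simp
  next
    case False
    have "lin_ext delta_vec X v = (\<Sum>w\<in>{w. X w \<noteq> 0}. X w * delta_vec w v)" by (simp add: lin_ext_def)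
    also have "\<dots> = (\<Sum>w\<in>{w. X w \<noteq> 0}. if v = w then X w else 0)"
      by (intro sum.cong refl) (simp add: delta_vec_def)
    also have "\<dots> = X v"
      using assms False unfolding fsupp_def by (simp only: sum.delta') simp
    finally show ?thesis .
  qed
qed

lemma lin_ext_comp:
  fixes X :: "'a \<Rightarrow> 'k::field"
  assumes X: "fsupp X" and f: "rowfin f"
  shows "lin_ext g (lin_ext f X) = lin_ext (\<lambda>w. lin_ext g (f w)) X"
proof
  fix v
  define S where "S = {w. X w \<noteq> 0}"
  define U where "U = (\<Union>w\<in>S. {u. f w u \<noteq> 0})"
  have fS: "finite S" using X unfolding S_def fsupp_def .
  have fU: "finite U" unfolding U_def
  proof (rule finite_UN_I)
    show "finite S" by (rule fS)
    fix w show "finite {u. f w u \<noteq> 0}" using f unfolding rowfin_def by simp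
  qed
  have sub: "{u. lin_ext f X u \<noteq> 0} \<subseteq> U"
  proof
    fix u assume "u \<in> {u. lin_ext f X u \<noteq> 0}"
    then have "lin_ext f X u \<noteq> 0" by simp
    then have "\<exists>w. X w \<noteq> 0 \<and> f w u \<noteq> 0" by (rule lin_ext_nz)
    then obtain w where "X w \<noteq> 0" "f w u \<noteq> 0" by (elim exE conjE)
    then show "u \<in> U" unfolding U_def S_def by (intro UN_I) simp_all
  qed
  have "lin_ext g (lin_ext f X) v = (\<Sum>u\<in>U. lin_ext f X u * g u v)"
    by (rule lin_ext_eq_sum[OF fU sub])
  also have "\<dots> = (\<Sum>u\<in>U. (\<Sum>w\<in>S. X w * f w u) * g u v)"
    by (intro sum.cong refl) (simp add: lin_ext_def S_def)
  also have "\<dots> = (\<Sum>u\<in>U. \<Sum>w\<in>S. X w * (f w u * g u v))"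
    by (simp add: sum_distrib_right mult.assoc)
  also have "\<dots> = (\<Sum>w\<in>S. \<Sum>u\<in>U. X w * (f w u * g u v))"
    by (rule sum.swap)
  also have "\<dots> = (\<Sum>w\<in>S. X w * lin_ext g (f w) v)"
  proof (intro sum.cong refl)
    fix w assume w: "w \<in> S"
    have "{u. f w u \<noteq> 0} \<subseteq> U" using w unfolding U_def by (intro subsetI UN_I) auto
    then have "lin_ext g (f w) v = (\<Sum>u\<in>U. f w u * g u v)" by (rule lin_ext_eq_sum[OF fU])
    then show "(\<Sum>u\<in>U. X w * (f w u * g u v)) = X w * lin_ext g (f w) v"
      by (simp add: sum_distrib_left)
  qed
  also have "\<dots> = lin_ext (\<lambda>w. lin_ext g (f w)) X v"
    by (simp add: lin_ext_def S_def)
  finally show "lin_ext g (lin_ext f X) v = lin_ext (\<lambda>w. lin_ext g (f w)) X v" .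
qed

section \<open>Positional operators\<close>

definition crow :: "('a \<times> 'a \<Rightarrow> 'a \<times> 'a \<Rightarrow> 'k::zero) \<Rightarrow> bool" where
  "crow c \<longleftrightarrow> (\<forall>p. finite {q. c p q \<noteq> 0})"

lemma pos_coef_nz:
  "pos_coef i c w u \<noteq> 0 \<Longrightarrow> 1 \<le> i \<and> i < length w \<and> length u = length w \<and>
     (\<forall>j<length w. j \<noteq> i - 1 \<and> j \<noteq> i \<longrightarrow> u ! j = w ! j) \<and> c (w ! (i - 1), w ! i) (u ! (i - 1), u ! i) \<noteq> 0"
  unfolding pos_coef_def by (auto split: if_splits)

lemma pos_coef_rowfin:
  assumes "crow c"
  shows "rowfin (pos_coef i c)"
  unfolding rowfin_def
proof
  fix w
  have "{u. pos_coef i c w u \<noteq> 0} \<subseteq>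
      (\<lambda>q. w[i - 1 := fst q, i := snd q]) ` {q. c (w ! (i - 1), w ! i) q \<noteq> 0}"
  proof
    fix u assume "u \<in> {u. pos_coef i c w u \<noteq> 0}"
    then have h: "1 \<le> i" "i < length w" "length u = length w"
      "\<forall>j<length w. j \<noteq> i - 1 \<and> j \<noteq> i \<longrightarrow> u ! j = w ! j"
      "c (w ! (i - 1), w ! i) (u ! (i - 1), u ! i) \<noteq> 0"
      using pos_coef_nz by blast+
    have "u = w[i - 1 := u ! (i - 1), i := u ! i]"
      by (rule nth_equalityI) (use h in \<open>auto simp: nth_list_update\<close>)
    then show "u \<in> (\<lambda>q. w[i - 1 := fst q, i := snd q]) ` {q. c (w ! (i - 1), w ! i) q \<noteq> 0}"
      using h(5) by (intro image_eqI[of _ _ "(u ! (i - 1), u ! i)"]) simp_all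
  qed
  moreover have "finite {q. c (w ! (i - 1), w ! i) q \<noteq> 0}" using assms unfolding crow_def by blast
  ultimately show "finite {u. pos_coef i c w u \<noteq> 0}" by (rule finite_subset[OF _ finite_imageI])
qed

lemma act_word_Nil[simp]: "act_word c cx [] X = X"
  by (simp add: act_word_def)

lemma act_word_Cons[simp]: "act_word c cx (g # ws) X = lin_ext (gen_coef c cx g) (act_word c cx ws X)"
  by (simp add: act_word_def)

lemma act_word_append: "act_word c cx (a @ b) X = act_word c cx a (act_word c cx b X)"
  by (simp add: act_word_def)

lemma gen_coef_rowfin: "crow c \<Longrightarrow> crow cx \<Longrightarrow> rowfin (gen_coef c cx g)"
  by (cases g) (simp_all add: pos_coef_rowfin)

lemma act_fsupp:
  fixes X :: "'a list \<Rightarrow> 'k::field"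
  shows "crow c \<Longrightarrow> crow cx \<Longrightarrow> fsupp X \<Longrightarrow> fsupp (act_word c cx ws X)"
  by (induction ws) (simp_all add: lin_ext_fsupp gen_coef_rowfin)

lemma act_lin:
  fixes X :: "'a list \<Rightarrow> 'k::field"
  assumes c: "crow c" "crow cx" and X: "fsupp X"
  shows "act_word c cx ws X = lin_ext (\<lambda>w. act_word c cx ws (delta_vec w)) X"
proof (induction ws)
  case Nil then show ?case using lin_ext_id[OF X] by simp
next
  case (Cons g ws)
  have rf: "rowfin (\<lambda>w. act_word c cx ws (delta_vec w :: 'a list \<Rightarrow> 'k))"
    using act_fsupp[OF c delta_fsupp] unfolding rowfin_def fsupp_def by blast
  have "act_word c cx (g # ws) X = lin_ext (gen_coef c cx g) (act_word c cx ws X)" by simp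
  also have "\<dots> = lin_ext (gen_coef c cx g) (lin_ext (\<lambda>w. act_word c cx ws (delta_vec w)) X)"
    by (subst Cons.IH) (rule refl)
  also have "\<dots> = lin_ext (\<lambda>w. lin_ext (gen_coef c cx g) (act_word c cx ws (delta_vec w))) X"
    by (rule lin_ext_comp[OF X rf])
  also have "\<dots> = lin_ext (\<lambda>w. act_word c cx (g # ws) (delta_vec w)) X" by simp
  finally show ?case .
qed

lemma act_eq_deltas:
  fixes X :: "'a list \<Rightarrow> 'k::field"
  assumes c: "crow c" "crow cx" and X: "fsupp X"
    and eq: "\<And>w. X w \<noteq> 0 \<Longrightarrow> act_word c cx ws1 (delta_vec w) = act_word c cx ws2 (delta_vec w)"
  shows "act_word c cx ws1 X = act_word c cx ws2 X"
proof -
  have "act_word c cx ws1 X = lin_ext (\<lambda>w. act_word c cx ws1 (delta_vec w)) X" by (rule act_lin[OF c X])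
  also have "\<dots> = lin_ext (\<lambda>w. act_word c cx ws2 (delta_vec w)) X" by (rule lin_ext_cong) (rule eq)
  also have "\<dots> = act_word c cx ws2 X" by (rule act_lin[OF c X, symmetric])
  finally show ?thesis .
qed

lemma gen_coef_len: "gen_coef c cx g w u \<noteq> 0 \<Longrightarrow> length u = length w"
  by (cases g) (auto dest: pos_coef_nz)

lemma act_len:
  fixes X :: "'a list \<Rightarrow> 'k::field"
  shows "(\<And>u. X u \<noteq> 0 \<Longrightarrow> length u = N) \<Longrightarrow> act_word c cx ws X v \<noteq> 0 \<Longrightarrow> length v = N"
proof (induction ws arbitrary: v)
  case Nil then show ?case by simp
next
  case (Cons g ws)
  then obtain w where "act_word c cx ws X w \<noteq> 0" "gen_coef c cx g w v \<noteq> 0"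
    using lin_ext_nz[of "gen_coef c cx g" "act_word c cx ws X" v] by auto
  then have "length w = N" using Cons.IH Cons.prems(1) by blast
  then show ?case using gen_coef_len[OF \<open>gen_coef c cx g w v \<noteq> 0\<close>] by simp
qed



lemma two_step:
  fixes c1 c2 :: "'a \<times> 'a \<Rightarrow> 'a \<times> 'a \<Rightarrow> 'k::field"
  assumes c2: "crow c2" and ij: "1 \<le> i" "1 \<le> j" "i < length w" "j < length w" "i + 2 \<le> j \<or> j + 2 \<le> i"
  shows "lin_ext (pos_coef i c1) (pos_coef j c2 w) v =
    (if length v = length w \<and> (\<forall>k<length w. k \<noteq> i - 1 \<and> k \<noteq> i \<and> k \<noteq> j - 1 \<and> k \<noteq> j \<longrightarrow> v ! k = w ! k)
     then c2 (w ! (j - 1), w ! j) (v ! (j - 1), v ! j) * c1 (w ! (i - 1), w ! i) (v ! (i - 1), v ! i) else 0)"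
proof -
  define u0 where "u0 = w[j - 1 := v ! (j - 1), j := v ! j]"
  define S where "S = {u. pos_coef j c2 w u \<noteq> 0}"
  define F where "F = (\<lambda>u. pos_coef j c2 w u * pos_coef i c1 u v)"
  have fS: "finite S" using pos_coef_rowfin[OF c2] unfolding rowfin_def S_def by simp
  have u0l: "length u0 = length w" unfolding u0_def by simp
  have u0j: "u0 ! (j - 1) = v ! (j - 1)" "u0 ! j = v ! j"
    unfolding u0_def using ij by (simp_all add: nth_list_update)
  have u0o: "u0 ! k = w ! k" if "k \<noteq> j - 1" "k \<noteq> j" for k
    unfolding u0_def using that by (simp add: nth_list_update)
  have only: "F u = 0" if "u \<noteq> u0" for u
  proof (rule ccontr)
    assume "F u \<noteq> 0"
    then have a: "pos_coef j c2 w u \<noteq> 0" and b: "pos_coef i c1 u v \<noteq> 0" unfolding F_def by auto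
    from pos_coef_nz[OF a] have ha: "length u = length w" "\<forall>k<length w. k \<noteq> j - 1 \<and> k \<noteq> j \<longrightarrow> u ! k = w ! k"
      by auto
    from pos_coef_nz[OF b] have hb: "length v = length u" "\<forall>k<length u. k \<noteq> i - 1 \<and> k \<noteq> i \<longrightarrow> v ! k = u ! k"
      by auto
    have "u = u0"
    proof (rule nth_equalityI)
      show "length u = length u0" using ha u0l by simp
      fix k assume k: "k < length u"
      show "u ! k = u0 ! k"
      proof (cases "k = j - 1 \<or> k = j")
        case True
        then have "k \<noteq> i - 1" "k \<noteq> i" using ij by auto
        then have "v ! k = u ! k" using hb k by blast
        then show ?thesis using True u0j by auto
      next
        case False
        then show ?thesis using ha k u0o by auto
      qed
    qed
    with that show False by simp
  qed
  have "lin_ext (pos_coef i c1) (pos_coef j c2 w) v = sum F S" unfolding lin_ext_def S_def F_def ..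
  also have "\<dots> = sum F (S \<inter> {u0})"
    by (rule sum.mono_neutral_right[OF fS]) (use only in auto)
  also have "\<dots> = F u0"
  proof (cases "u0 \<in> S")
    case True
    then have "S \<inter> {u0} = {u0}" by auto
    then show ?thesis by simp
  next
    case False
    then have "S \<inter> {u0} = {}" by auto
    moreover have "F u0 = 0" using False unfolding F_def S_def by simp
    ultimately show ?thesis by simp
  qed
  finally have lhs: "lin_ext (pos_coef i c1) (pos_coef j c2 w) v = F u0" .
  have pj: "pos_coef j c2 w u0 = c2 (w ! (j - 1), w ! j) (v ! (j - 1), v ! j)"
    unfolding pos_coef_def using u0l u0o u0j ij by auto
  have u0i: "u0 ! (i - 1) = w ! (i - 1)" "u0 ! i = w ! i" using ij u0o by auto
  have ceq: "(length v = length u0 \<and> (\<forall>k<length u0. k \<noteq> i - 1 \<and> k \<noteq> i \<longrightarrow> v ! k = u0 ! k)) \<longleftrightarrow>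
     (length v = length w \<and> (\<forall>k<length w. k \<noteq> i - 1 \<and> k \<noteq> i \<and> k \<noteq> j - 1 \<and> k \<noteq> j \<longrightarrow> v ! k = w ! k))"
  proof
    assume h: "length v = length u0 \<and> (\<forall>k<length u0. k \<noteq> i - 1 \<and> k \<noteq> i \<longrightarrow> v ! k = u0 ! k)"
    show "length v = length w \<and> (\<forall>k<length w. k \<noteq> i - 1 \<and> k \<noteq> i \<and> k \<noteq> j - 1 \<and> k \<noteq> j \<longrightarrow> v ! k = w ! k)"
      using h u0l u0o by auto
  next
    assume h: "length v = length w \<and> (\<forall>k<length w. k \<noteq> i - 1 \<and> k \<noteq> i \<and> k \<noteq> j - 1 \<and> k \<noteq> j \<longrightarrow> v ! k = w ! k)"
    show "length v = length u0 \<and> (\<forall>k<length u0. k \<noteq> i - 1 \<and> k \<noteq> i \<longrightarrow> v ! k = u0 ! k)"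
    proof (intro conjI allI impI)
      show "length v = length u0" using h u0l by simp
      fix k assume k: "k < length u0" "k \<noteq> i - 1 \<and> k \<noteq> i"
      show "v ! k = u0 ! k"
      proof (cases "k = j - 1 \<or> k = j")
        case True then show ?thesis using u0j by auto
      next
        case False then show ?thesis using h k u0l u0o by auto
      qed
    qed
  qed
  have pi: "pos_coef i c1 u0 v =
     (if length v = length w \<and> (\<forall>k<length w. k \<noteq> i - 1 \<and> k \<noteq> i \<and> k \<noteq> j - 1 \<and> k \<noteq> j \<longrightarrow> v ! k = w ! k)
      then c1 (w ! (i - 1), w ! i) (v ! (i - 1), v ! i) else 0)"
    unfolding pos_coef_def using ceq u0l u0i ij by auto
  show ?thesis unfolding lhs F_def pj pi by auto
qed

lemma pos_comm:
  fixes c1 c2 :: "'a \<times> 'a \<Rightarrow> 'a \<times> 'a \<Rightarrow> 'k::field"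
  assumes "crow c1" "crow c2" "1 \<le> i" "i + 2 \<le> j" "j < length w"
  shows "lin_ext (pos_coef i c1) (pos_coef j c2 w) = lin_ext (pos_coef j c2) (pos_coef i c1 w)"
proof
  fix v
  have A: "lin_ext (pos_coef i c1) (pos_coef j c2 w) v =
    (if length v = length w \<and> (\<forall>k<length w. k \<noteq> i - 1 \<and> k \<noteq> i \<and> k \<noteq> j - 1 \<and> k \<noteq> j \<longrightarrow> v ! k = w ! k)
     then c2 (w ! (j - 1), w ! j) (v ! (j - 1), v ! j) * c1 (w ! (i - 1), w ! i) (v ! (i - 1), v ! i) else 0)"
    by (rule two_step) (use assms in auto)
  have B: "lin_ext (pos_coef j c2) (pos_coef i c1 w) v =
    (if length v = length w \<and> (\<forall>k<length w. k \<noteq> j - 1 \<and> k \<noteq> j \<and> k \<noteq> i - 1 \<and> k \<noteq> i \<longrightarrow> v ! k = w ! k)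
     then c1 (w ! (i - 1), w ! i) (v ! (i - 1), v ! i) * c2 (w ! (j - 1), w ! j) (v ! (j - 1), v ! j) else 0)"
    by (rule two_step) (use assms in auto)
  have C: "(\<forall>k<length w. k \<noteq> i - 1 \<and> k \<noteq> i \<and> k \<noteq> j - 1 \<and> k \<noteq> j \<longrightarrow> v ! k = w ! k) \<longleftrightarrow>
           (\<forall>k<length w. k \<noteq> j - 1 \<and> k \<noteq> j \<and> k \<noteq> i - 1 \<and> k \<noteq> i \<longrightarrow> v ! k = w ! k)" by blast
  show "lin_ext (pos_coef i c1) (pos_coef j c2 w) v = lin_ext (pos_coef j c2) (pos_coef i c1 w) v"
    unfolding A B C by (auto simp: mult.commute)
qed



lemma agree_split:
  assumes l: "length u1 = length a" "length u2 = length t" "length u3 = length b"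
    and xy: "x < length t" "y < length t"
  shows "(\<forall>k<length a + length t + length b. k \<noteq> length a + x \<and> k \<noteq> length a + y \<longrightarrow>
            (u1 @ u2 @ u3) ! k = (a @ t @ b) ! k) \<longleftrightarrow>
         (u1 = a \<and> u3 = b \<and> (\<forall>k<length t. k \<noteq> x \<and> k \<noteq> y \<longrightarrow> u2 ! k = t ! k))"
proof
  assume H: "\<forall>k<length a + length t + length b. k \<noteq> length a + x \<and> k \<noteq> length a + y \<longrightarrow>
            (u1 @ u2 @ u3) ! k = (a @ t @ b) ! k"
  have 1: "u1 = a"
  proof (rule nth_equalityI)
    show "length u1 = length a" by (rule l(1))
    fix k assume k: "k < length u1"
    have "(u1 @ u2 @ u3) ! k = (a @ t @ b) ! k" using H k l by auto
    then show "u1 ! k = a ! k" using k l by (simp add: nth_append)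
  qed
  have 2: "u3 = b"
  proof (rule nth_equalityI)
    show "length u3 = length b" by (rule l(3))
    fix k assume k: "k < length u3"
    have "(u1 @ u2 @ u3) ! (length a + length t + k) = (a @ t @ b) ! (length a + length t + k)"
      using H k l xy by auto
    then show "u3 ! k = b ! k" using k l by (simp add: nth_append)
  qed
  have 3: "\<forall>k<length t. k \<noteq> x \<and> k \<noteq> y \<longrightarrow> u2 ! k = t ! k"
  proof (intro allI impI)
    fix k assume k: "k < length t" "k \<noteq> x \<and> k \<noteq> y"
    have "(u1 @ u2 @ u3) ! (length a + k) = (a @ t @ b) ! (length a + k)"
      using H k l by auto
    then show "u2 ! k = t ! k" using k l by (simp add: nth_append)
  qed
  show "u1 = a \<and> u3 = b \<and> (\<forall>k<length t. k \<noteq> x \<and> k \<noteq> y \<longrightarrow> u2 ! k = t ! k)" using 1 2 3 by simp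
next
  assume H: "u1 = a \<and> u3 = b \<and> (\<forall>k<length t. k \<noteq> x \<and> k \<noteq> y \<longrightarrow> u2 ! k = t ! k)"
  show "\<forall>k<length a + length t + length b. k \<noteq> length a + x \<and> k \<noteq> length a + y \<longrightarrow>
            (u1 @ u2 @ u3) ! k = (a @ t @ b) ! k"
  proof (intro allI impI)
    fix k assume k: "k < length a + length t + length b" "k \<noteq> length a + x \<and> k \<noteq> length a + y"
    show "(u1 @ u2 @ u3) ! k = (a @ t @ b) ! k"
    proof (cases "k < length a")
      case True then show ?thesis using H by (simp add: nth_append)
    next
      case False
      then have k1: "\<not> k < length a" .
      show ?thesis
      proof (cases "k < length a + length t")
        case True
        then have "k - length a < length t" "k - length a \<noteq> x" "k - length a \<noteq> y" using False k by auto
        then have "u2 ! (k - length a) = t ! (k - length a)" using H by blast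
        moreover have "(u1 @ u2 @ u3) ! k = u2 ! (k - length a)"
          using \<open>k - length a < length t\<close> False True l by (simp add: nth_append)
        moreover have "(a @ t @ b) ! k = t ! (k - length a)"
          using \<open>k - length a < length t\<close> False True by (simp add: nth_append)
        ultimately show ?thesis by simp
      next
        case False2: False
        have "\<not> k - length a < length t" using False2 by simp
        then have "(u1 @ u2 @ u3) ! k = u3 ! (k - length a - length t)" using k1 False2 l by (simp add: nth_append)
        moreover have "(a @ t @ b) ! k = b ! (k - length a - length t)"
          using \<open>\<not> k - length a < length t\<close> k1 False2 by (simp add: nth_append)
        ultimately show ?thesis using H by simp
      qed
    qed
  qed
qed

definition emb :: "'a list \<Rightarrow> 'a list \<Rightarrow> ('a list \<Rightarrow> 'k::zero) \<Rightarrow> 'a list \<Rightarrow> 'k" where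
  "emb a b Y u = (if length u = length a + 3 + length b \<and> take (length a) u = a \<and> drop (length a + 3) u = b
                  then Y (take 3 (drop (length a) u)) else 0)"

lemma emb_app: "length t = 3 \<Longrightarrow> emb a b Y (a @ t @ b) = Y t"
  by (simp add: emb_def)

lemma pc_emb:
  assumes t: "length t = 3" and d: "d = 1 \<or> d = 2"
  shows "pos_coef (length a + d) c (a @ t @ b) u = emb a b (pos_coef d c t) u"
proof (cases "length u = length a + 3 + length b")
  case False
  then show ?thesis using t by (simp add: pos_coef_def emb_def)
next
  case True
  define u1 where "u1 = take (length a) u"
  define u2 where "u2 = take 3 (drop (length a) u)"
  define u3 where "u3 = drop (length a + 3) u"
  have u: "u = u1 @ u2 @ u3" unfolding u1_def u2_def u3_def
    by (metis append_take_drop_id drop_drop add.commute)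
  have l: "length u1 = length a" "length u2 = length t" "length u3 = length b"
    using True t unfolding u1_def u2_def u3_def by auto
  have e: "emb a b Y u = (if u1 = a \<and> u3 = b then Y u2 else 0)" for Y :: "'a list \<Rightarrow> 'b"
    using True unfolding emb_def u1_def u2_def u3_def by simp
  have ag: "(\<forall>k<length a + length t + length b. k \<noteq> length a + (d - 1) \<and> k \<noteq> length a + d \<longrightarrow>
            (u1 @ u2 @ u3) ! k = (a @ t @ b) ! k) \<longleftrightarrow>
         (u1 = a \<and> u3 = b \<and> (\<forall>k<length t. k \<noteq> d - 1 \<and> k \<noteq> d \<longrightarrow> u2 ! k = t ! k))"
    by (rule agree_split[OF l]) (use t d in auto)
  have ix: "length a + d - 1 = length a + (d - 1)" using d by auto
  have n1: "(a @ t @ b) ! (length a + d - 1) = t ! (d - 1)" "(a @ t @ b) ! (length a + d) = t ! d"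
    "u ! (length a + d - 1) = u2 ! (d - 1)" "u ! (length a + d) = u2 ! d"
    using l t d unfolding ix u by (auto simp: nth_append)
  have C0: "1 \<le> length a + d \<and> length a + d < length (a @ t @ b) \<and> length u = length (a @ t @ b)"
    using True t d by auto
  have C1: "(\<forall>j<length (a @ t @ b). j \<noteq> length a + d - 1 \<and> j \<noteq> length a + d \<longrightarrow> u ! j = (a @ t @ b) ! j)
     \<longleftrightarrow> (\<forall>k<length a + length t + length b. k \<noteq> length a + (d - 1) \<and> k \<noteq> length a + d \<longrightarrow>
            (u1 @ u2 @ u3) ! k = (a @ t @ b) ! k)"
    unfolding ix by (simp add: u[symmetric] add.assoc)
  have C: "(1 \<le> length a + d \<and> length a + d < length (a @ t @ b) \<and> length u = length (a @ t @ b)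
         \<and> (\<forall>j<length (a @ t @ b). j \<noteq> length a + d - 1 \<and> j \<noteq> length a + d \<longrightarrow> u ! j = (a @ t @ b) ! j))
     \<longleftrightarrow> (u1 = a \<and> u3 = b \<and> (\<forall>k<length t. k \<noteq> d - 1 \<and> k \<noteq> d \<longrightarrow> u2 ! k = t ! k))"
    using C0 C1 ag by simp
  have L: "pos_coef (length a + d) c (a @ t @ b) u =
     (if u1 = a \<and> u3 = b \<and> (\<forall>k<length t. k \<noteq> d - 1 \<and> k \<noteq> d \<longrightarrow> u2 ! k = t ! k)
      then c (t ! (d - 1), t ! d) (u2 ! (d - 1), u2 ! d) else 0)"
    unfolding pos_coef_def C n1 ..
  have C2: "(1 \<le> d \<and> d < length t \<and> length u2 = length t \<and> (\<forall>j<length t. j \<noteq> d - 1 \<and> j \<noteq> d \<longrightarrow> u2 ! j = t ! j))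
     \<longleftrightarrow> (\<forall>j<length t. j \<noteq> d - 1 \<and> j \<noteq> d \<longrightarrow> u2 ! j = t ! j)"
    using d t l by auto
  have R: "pos_coef d c t u2 = (if (\<forall>j<length t. j \<noteq> d - 1 \<and> j \<noteq> d \<longrightarrow> u2 ! j = t ! j)
      then c (t ! (d - 1), t ! d) (u2 ! (d - 1), u2 ! d) else 0)"
    unfolding pos_coef_def C2 ..
  show ?thesis unfolding L e R by auto
qed

lemma split3: "take n u @ take m (drop n u) @ drop (n + m) u = u"
proof -
  have d: "drop (n + m) u = drop m (drop n u)" by (simp add: add.commute)
  have "take n u @ take m (drop n u) @ drop (n + m) u = take n u @ (take m (drop n u) @ drop m (drop n u))"
    by (simp only: d)
  also have "\<dots> = take n u @ drop n u" by (simp only: append_take_drop_id)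
  also have "\<dots> = u" by (rule append_take_drop_id)
  finally show ?thesis .
qed

lemma emb_nz: "emb a b Y u \<noteq> 0 \<Longrightarrow> u = a @ take 3 (drop (length a) u) @ b \<and> Y (take 3 (drop (length a) u)) \<noteq> 0"
proof -
  assume h: "emb a b Y u \<noteq> 0"
  then have c: "take (length a) u = a" "drop (length a + 3) u = b" "Y (take 3 (drop (length a) u)) \<noteq> 0"
    unfolding emb_def by (auto split: if_splits)
  have "u = take (length a) u @ take 3 (drop (length a) u) @ drop (length a + 3) u" by (rule split3[symmetric])
  then show ?thesis using c by simp
qed

lemma emb_lin:
  fixes Y :: "'a list \<Rightarrow> 'k::field"
  assumes Y: "\<And>t. Y t \<noteq> 0 \<Longrightarrow> length t = 3" and d: "d = 1 \<or> d = 2"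
  shows "lin_ext (pos_coef (length a + d) c) (emb a b Y) = emb a b (lin_ext (pos_coef d c) Y)"
proof
  fix u
  have supp: "{w. emb a b Y w \<noteq> 0} = (\<lambda>t. a @ t @ b) ` {t. Y t \<noteq> 0}"
  proof
    show "{w. emb a b Y w \<noteq> 0} \<subseteq> (\<lambda>t. a @ t @ b) ` {t. Y t \<noteq> 0}"
    proof
      fix w assume "w \<in> {w. emb a b Y w \<noteq> 0}"
      then have "w = a @ take 3 (drop (length a) w) @ b \<and> Y (take 3 (drop (length a) w)) \<noteq> 0"
        using emb_nz by simp
      then show "w \<in> (\<lambda>t. a @ t @ b) ` {t. Y t \<noteq> 0}" by (intro image_eqI[of _ _ "take 3 (drop (length a) w)"]) auto
    qed
    show "(\<lambda>t. a @ t @ b) ` {t. Y t \<noteq> 0} \<subseteq> {w. emb a b Y w \<noteq> 0}"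
    proof
      fix w assume "w \<in> (\<lambda>t. a @ t @ b) ` {t. Y t \<noteq> 0}"
      then obtain t where t: "w = a @ t @ b" "Y t \<noteq> 0" by blast
      have "length t = 3" by (rule Y[OF t(2)])
      have "emb a b Y w = Y t" unfolding t(1) by (rule emb_app[OF \<open>length t = 3\<close>])
      then show "w \<in> {w. emb a b Y w \<noteq> 0}" using t(2) by simp
    qed
  qed
  have inj: "inj_on (\<lambda>t. a @ t @ b) {t. Y t \<noteq> 0}" by (rule inj_onI) simp
  have "lin_ext (pos_coef (length a + d) c) (emb a b Y) u =
      (\<Sum>w\<in>(\<lambda>t. a @ t @ b) ` {t. Y t \<noteq> 0}. emb a b Y w * pos_coef (length a + d) c w u)"
    unfolding lin_ext_def supp ..
  also have "\<dots> = (\<Sum>t\<in>{t. Y t \<noteq> 0}. emb a b Y (a @ t @ b) * pos_coef (length a + d) c (a @ t @ b) u)"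
    by (rule sum.reindex[OF inj, unfolded comp_def])
  also have "\<dots> = (\<Sum>t\<in>{t. Y t \<noteq> 0}. Y t * emb a b (pos_coef d c t) u)"
    by (intro sum.cong refl) (simp add: Y emb_app pc_emb[OF _ d])
  also have "\<dots> = emb a b (lin_ext (pos_coef d c) Y) u"
  proof (cases "length u = length a + 3 + length b \<and> take (length a) u = a \<and> drop (length a + 3) u = b")
    case True then show ?thesis unfolding emb_def lin_ext_def by simp
  next
    case False then show ?thesis unfolding emb_def lin_ext_def if_not_P[OF False] by simp
  qed
  finally show "lin_ext (pos_coef (length a + d) c) (emb a b Y) u = emb a b (lin_ext (pos_coef d c) Y) u" .
qed

lemma delta_emb:
  assumes "length t = 3"
  shows "(delta_vec (a @ t @ b) :: 'a list \<Rightarrow> 'k::field) = emb a b (delta_vec t)"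
proof
  fix u
  show "(delta_vec (a @ t @ b) :: 'a list \<Rightarrow> 'k) u = emb a b (delta_vec t) u"
  proof (cases "u = a @ t @ b")
    case True then show ?thesis using assms by (simp add: emb_app delta_vec_def)
  next
    case False
    have "emb a b (delta_vec t :: 'a list \<Rightarrow> 'k) u = 0"
    proof (rule ccontr)
      assume "emb a b (delta_vec t :: 'a list \<Rightarrow> 'k) u \<noteq> 0"
      then have "u = a @ take 3 (drop (length a) u) @ b \<and> (delta_vec t :: 'a list \<Rightarrow> 'k) (take 3 (drop (length a) u)) \<noteq> 0"
        by (rule emb_nz)
      then show False using False by (auto simp: delta_vec_def split: if_splits)
    qed
    then show ?thesis using False by (simp add: delta_vec_def)
  qed
qed

lemma lin_ext_pos_len:
  fixes Y :: "'a list \<Rightarrow> 'k::field"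
  shows "(\<And>t. Y t \<noteq> 0 \<Longrightarrow> length t = L) \<Longrightarrow> lin_ext (pos_coef d c) Y u \<noteq> 0 \<Longrightarrow> length u = L"
proof -
  assume Y: "\<And>t. Y t \<noteq> 0 \<Longrightarrow> length t = L" and nz: "lin_ext (pos_coef d c) Y u \<noteq> 0"
  have "\<exists>w. Y w \<noteq> 0 \<and> pos_coef d c w u \<noteq> 0" by (rule lin_ext_nz[OF nz])
  then obtain w where "Y w \<noteq> 0" "pos_coef d c w u \<noteq> 0" by (elim exE conjE)
  then show "length u = L" using Y pos_coef_nz by metis
qed

definition braid3 :: "('a \<times> 'a \<Rightarrow> 'a \<times> 'a \<Rightarrow> 'k::field) \<Rightarrow> bool" where
  "braid3 c \<longleftrightarrow> (\<forall>w. length w = 3 \<longrightarrow>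
        lin_ext (pos_coef 1 c) (lin_ext (pos_coef 2 c) (lin_ext (pos_coef 1 c) (delta_vec w)))
      = lin_ext (pos_coef 2 c) (lin_ext (pos_coef 1 c) (lin_ext (pos_coef 2 c) (delta_vec w))))"

lemma braid_kernel:
  fixes c :: "'a \<times> 'a \<Rightarrow> 'a \<times> 'a \<Rightarrow> 'k::field"
  assumes B: "braid3 c" and i: "1 \<le> i" "Suc i < length w"
  shows "lin_ext (pos_coef i c) (lin_ext (pos_coef (Suc i) c) (lin_ext (pos_coef i c) (delta_vec w)))
       = lin_ext (pos_coef (Suc i) c) (lin_ext (pos_coef i c) (lin_ext (pos_coef (Suc i) c) (delta_vec w)))"
proof -
  define a where "a = take (i - 1) w"
  define t where "t = take 3 (drop (i - 1) w)"
  define b where "b = drop (i + 2) w"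
  have w: "w = a @ t @ b"
  proof -
    have "i - 1 + 3 = i + 2" using i by simp
    then show ?thesis unfolding a_def t_def b_def using split3[where n="i - 1" and m=3 and u=w] by simp
  qed
  have tl: "length t = 3" unfolding t_def using i by simp
  have la: "length a = i - 1" unfolding a_def using i by simp
  have i1: "pos_coef i c = pos_coef (length a + 1) c" "pos_coef (Suc i) c = pos_coef (length a + 2) c"
    using la i by auto
  have d: "(delta_vec w :: 'a list \<Rightarrow> 'k) = emb a b (delta_vec t)" unfolding w by (rule delta_emb[OF tl])
  have len0: "\<And>u. (delta_vec t :: 'a list \<Rightarrow> 'k) u \<noteq> 0 \<Longrightarrow> length u = 3"
    using tl by (auto simp: delta_vec_def split: if_splits)
  have step1: "lin_ext (pos_coef (length a + dd) c) (emb a b Y) = emb a b (lin_ext (pos_coef dd c) Y)"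
    if "\<And>u. (Y :: 'a list \<Rightarrow> 'k) u \<noteq> 0 \<Longrightarrow> length u = 3" "dd = 1 \<or> dd = 2" for Y dd
    by (rule emb_lin[OF that])
  have step2: "\<And>u. lin_ext (pos_coef dd c) Y u \<noteq> 0 \<Longrightarrow> length u = 3"
    if "\<And>u. (Y :: 'a list \<Rightarrow> 'k) u \<noteq> 0 \<Longrightarrow> length u = 3" for Y dd
    by (rule lin_ext_pos_len[OF that])
  define P1 where "P1 = lin_ext (pos_coef 1 c) (delta_vec t :: 'a list \<Rightarrow> 'k)"
  define P2 where "P2 = lin_ext (pos_coef 2 c) (delta_vec t :: 'a list \<Rightarrow> 'k)"
  have s1: "lin_ext (pos_coef (length a + 1) c) (emb a b (delta_vec t)) = emb a b P1"
    unfolding P1_def using emb_lin[OF len0, where d="1::nat"] by simp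
  have l1: "\<And>u. P1 u \<noteq> 0 \<Longrightarrow> length u = 3" unfolding P1_def by (rule step2[OF len0])
  have s2: "lin_ext (pos_coef (length a + 2) c) (emb a b (delta_vec t)) = emb a b P2"
    unfolding P2_def using emb_lin[OF len0, where d="2::nat"] by simp
  have l2: "\<And>u. P2 u \<noteq> 0 \<Longrightarrow> length u = 3" unfolding P2_def by (rule step2[OF len0])
  define P21 where "P21 = lin_ext (pos_coef 2 c) P1"
  define P12 where "P12 = lin_ext (pos_coef 1 c) P2"
  have s3: "lin_ext (pos_coef (length a + 2) c) (emb a b P1) = emb a b P21"
    unfolding P21_def using emb_lin[OF l1, where d="2::nat"] by simp
  have l3: "\<And>u. P21 u \<noteq> 0 \<Longrightarrow> length u = 3" unfolding P21_def by (rule step2[OF l1])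
  have s4: "lin_ext (pos_coef (length a + 1) c) (emb a b P2) = emb a b P12"
    unfolding P12_def using emb_lin[OF l2, where d="1::nat"] by simp
  have l4: "\<And>u. P12 u \<noteq> 0 \<Longrightarrow> length u = 3" unfolding P12_def by (rule step2[OF l2])
  have s5: "lin_ext (pos_coef (length a + 1) c) (emb a b P21) = emb a b (lin_ext (pos_coef 1 c) P21)"
    using emb_lin[OF l3, where d="1::nat"] by simp
  have s6: "lin_ext (pos_coef (length a + 2) c) (emb a b P12) = emb a b (lin_ext (pos_coef 2 c) P12)"
    using emb_lin[OF l4, where d="2::nat"] by simp
  have "lin_ext (pos_coef 1 c) P21 = lin_ext (pos_coef 2 c) P12"
    using B tl unfolding braid3_def P21_def P12_def P1_def P2_def by simp
  then show ?thesis unfolding d i1 s1 s2 s3 s4 s5 s6 by (rule arg_cong)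
qed



lemma beq_act:
  fixes c cx :: "'a \<times> 'a \<Rightarrow> 'a \<times> 'a \<Rightarrow> 'k::field"
  assumes cr: "crow c" "crow cx" and B: "braid3 c"
  shows "beq N u v \<Longrightarrow> fsupp X \<Longrightarrow> (\<And>w. X w \<noteq> 0 \<Longrightarrow> length w = N) \<Longrightarrow>
         act_word c cx (map Sg u) X = act_word c cx (map Sg v) X"
proof (induction arbitrary: X rule: beq.induct)
  case (brefl w) then show ?case by simp
next
  case (bsym w v) show ?case by (rule bsym.IH[OF bsym.prems, symmetric])
next
  case (btrans u v w) show ?case using btrans.IH(1)[OF btrans.prems] btrans.IH(2)[OF btrans.prems] by simp
next
  case (bcomm i j p q)
  define Y where "Y = act_word c cx (map Sg q) X"
  have fY: "fsupp Y" unfolding Y_def by (rule act_fsupp[OF cr bcomm.prems(1)])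
  have lY: "length w = N" if "Y w \<noteq> 0" for w
    by (rule act_len[of X N c cx "map Sg q" w, OF bcomm.prems(2) that[unfolded Y_def]])
  have e: "act_word c cx [Sg i, Sg j] Y = act_word c cx [Sg j, Sg i] Y"
  proof (rule act_eq_deltas[OF cr fY])
    fix w assume "Y w \<noteq> 0"
    then have lw: "length w = N" by (rule lY)
    have "act_word c cx [Sg i, Sg j] (delta_vec w) = lin_ext (pos_coef i c) (pos_coef j c w)"
      by (simp add: lin_ext_delta)
    also have "\<dots> = lin_ext (pos_coef j c) (pos_coef i c w)"
      by (rule pos_comm) (use cr bcomm.hyps lw in auto)
    also have "\<dots> = act_word c cx [Sg j, Sg i] (delta_vec w)"
      by (simp add: lin_ext_delta)
    finally show "act_word c cx [Sg i, Sg j] (delta_vec w) = act_word c cx [Sg j, Sg i] (delta_vec w)" .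
  qed
  have m1: "map Sg (p @ [i, j] @ q) = map Sg p @ [Sg i, Sg j] @ map Sg q" by simp
  have m2: "map Sg (p @ [j, i] @ q) = map Sg p @ [Sg j, Sg i] @ map Sg q" by simp
  show ?case unfolding m1 m2 act_word_append Y_def[symmetric] e ..
next
  case (bbraid i p q)
  define Y where "Y = act_word c cx (map Sg q) X"
  have fY: "fsupp Y" unfolding Y_def by (rule act_fsupp[OF cr bbraid.prems(1)])
  have lY: "length w = N" if "Y w \<noteq> 0" for w
    by (rule act_len[of X N c cx "map Sg q" w, OF bbraid.prems(2) that[unfolded Y_def]])
  have e: "act_word c cx [Sg i, Sg (Suc i), Sg i] Y = act_word c cx [Sg (Suc i), Sg i, Sg (Suc i)] Y"
  proof (rule act_eq_deltas[OF cr fY])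
    fix w assume "Y w \<noteq> 0"
    then have lw: "length w = N" by (rule lY)
    show "act_word c cx [Sg i, Sg (Suc i), Sg i] (delta_vec w) = act_word c cx [Sg (Suc i), Sg i, Sg (Suc i)] (delta_vec w)"
      using braid_kernel[OF B, of i w] bbraid.hyps lw by simp
  qed
  have m1: "map Sg (p @ [i, Suc i, i] @ q) = map Sg p @ [Sg i, Sg (Suc i), Sg i] @ map Sg q" by simp
  have m2: "map Sg (p @ [Suc i, i, Suc i] @ q) = map Sg p @ [Sg (Suc i), Sg i, Sg (Suc i)] @ map Sg q" by simp
  show ?case unfolding m1 m2 act_word_append Y_def[symmetric] e ..
qed

lemma map_the_Some: "None \<notin> set u \<Longrightarrow> map Some (map the u) = u"
  by (induction u) auto

lemma iota_Some: "iota Y (map Some x) = Y x"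
  by (simp add: iota_def comp_def)

lemma iota_None: "None \<in> set u \<Longrightarrow> iota Y u = 0"
  by (simp add: iota_def)

lemma iota_inj: "iota Y1 = iota Y2 \<Longrightarrow> Y1 = Y2"
proof
  fix x assume e: "iota Y1 = iota Y2"
  have "Y1 x = iota Y1 (map Some x)" by (simp add: iota_Some)
  also have "\<dots> = iota Y2 (map Some x)" using e by simp
  also have "\<dots> = Y2 x" by (simp add: iota_Some)
  finally show "Y1 x = Y2 x" .
qed

lemma pc_map_Some: "pos_coef i sig (map Some x) (map Some v) = pos_coef i (sigV sig) x v"
proof (cases "length v = length x")
  case True
  have "(\<forall>j<length x. j \<noteq> i - 1 \<and> j \<noteq> i \<longrightarrow> map Some v ! j = map Some x ! j) \<longleftrightarrow>
        (\<forall>j<length x. j \<noteq> i - 1 \<and> j \<noteq> i \<longrightarrow> v ! j = x ! j)" using True by auto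
  then show ?thesis using True unfolding pos_coef_def sigV_def by auto
next
  case False then show ?thesis unfolding pos_coef_def by simp
qed

definition sigH :: "('b option \<times> 'b option \<Rightarrow> 'b option \<times> 'b option \<Rightarrow> 'k::zero) \<Rightarrow> bool" where
  "sigH sig \<longleftrightarrow> (\<forall>a b c d. sig (Some a, Some b) (c, d) \<noteq> 0 \<longrightarrow> c \<noteq> None \<and> d \<noteq> None)"

lemma pc_some_some:
  assumes H: "sigH sig" and nz: "pos_coef i sig w u \<noteq> 0" and w: "None \<notin> set w"
  shows "None \<notin> set u"
proof
  assume "None \<in> set u"
  then obtain k where k: "k < length u" "u ! k = None" by (metis in_set_conv_nth)
  from pos_coef_nz[OF nz] have h: "1 \<le> i" "i < length w" "length u = length w"
    "\<forall>j<length w. j \<noteq> i - 1 \<and> j \<noteq> i \<longrightarrow> u ! j = w ! j"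
    "sig (w ! (i - 1), w ! i) (u ! (i - 1), u ! i) \<noteq> 0" by auto
  have "w ! (i - 1) \<in> set w" "w ! i \<in> set w" using h by simp_all
  then have wi: "w ! (i - 1) \<noteq> None" "w ! i \<noteq> None" using w by (metis, metis)
  then obtain a b where ab: "w ! (i - 1) = Some a" "w ! i = Some b" by blast
  have "u ! (i - 1) \<noteq> None \<and> u ! i \<noteq> None" using H h(5) ab unfolding sigH_def by auto
  moreover have "u ! k = w ! k" if "k \<noteq> i - 1" "k \<noteq> i" using h k that by auto
  moreover have "w ! k \<in> set w" using k h by simp
  then have "w ! k \<noteq> None" using w by metis
  ultimately show False using k by (cases "k = i - 1 \<or> k = i") auto
qed

lemma pc_iota:
  fixes Y :: "'b list \<Rightarrow> 'k::field"
  assumes H: "sigH sig"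
  shows "lin_ext (pos_coef i sig) (iota Y) = iota (lin_ext (pos_coef i (sigV sig)) Y)"
proof
  fix u
  show "lin_ext (pos_coef i sig) (iota Y) u = iota (lin_ext (pos_coef i (sigV sig)) Y) u"
  proof (cases "None \<in> set u")
    case True
    have "lin_ext (pos_coef i sig) (iota Y) u = 0" unfolding lin_ext_def
    proof (rule sum.neutral, rule ballI)
      fix w assume w: "w \<in> {w. iota Y w \<noteq> 0}"
      then have wn: "None \<notin> set w" using iota_None by blast
      show "iota Y w * pos_coef i sig w u = 0"
      proof (rule ccontr)
        assume "iota Y w * pos_coef i sig w u \<noteq> 0"
        then have "pos_coef i sig w u \<noteq> 0" by simp
        then have "None \<notin> set u" by (rule pc_some_some[OF H _ wn])
        then show False using True by simp
      qed
    qed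
    then show ?thesis using iota_None[OF True] by simp
  next
    case False
    define v where "v = map the u"
    have u: "u = map Some v" unfolding v_def by (rule map_the_Some[OF False, symmetric])
    have supp: "{w. iota Y w \<noteq> 0} = map Some ` {x. Y x \<noteq> 0}"
    proof
      show "{w. iota Y w \<noteq> 0} \<subseteq> map Some ` {x. Y x \<noteq> 0}"
      proof
        fix w assume "w \<in> {w. iota Y w \<noteq> 0}"
        then have wn: "None \<notin> set w" and "Y (map the w) \<noteq> 0" unfolding iota_def by (auto split: if_splits)
        show "w \<in> map Some ` {x. Y x \<noteq> 0}"
        proof (rule image_eqI[of _ _ "map the w"])
          show "w = map Some (map the w)" by (rule map_the_Some[OF wn, symmetric])
          show "map the w \<in> {x. Y x \<noteq> 0}" using \<open>Y (map the w) \<noteq> 0\<close> by simp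
        qed
      qed
      show "map Some ` {x. Y x \<noteq> 0} \<subseteq> {w. iota Y w \<noteq> 0}" by (auto simp: iota_Some)
    qed
    have inj: "inj_on (map Some) {x. Y x \<noteq> 0}" by (rule inj_onI) (simp add: inj_map_eq_map)
    have "lin_ext (pos_coef i sig) (iota Y) u = (\<Sum>w\<in>map Some ` {x. Y x \<noteq> 0}. iota Y w * pos_coef i sig w u)"
      unfolding lin_ext_def supp ..
    also have "\<dots> = (\<Sum>x\<in>{x. Y x \<noteq> 0}. iota Y (map Some x) * pos_coef i sig (map Some x) u)"
      by (rule sum.reindex[OF inj, unfolded comp_def])
    also have "\<dots> = (\<Sum>x\<in>{x. Y x \<noteq> 0}. Y x * pos_coef i (sigV sig) x v)"
      unfolding u by (simp add: iota_Some pc_map_Some)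
    also have "\<dots> = iota (lin_ext (pos_coef i (sigV sig)) Y) u"
      unfolding u iota_Some lin_ext_def ..
    finally show ?thesis .
  qed
qed

lemma act_iota:
  fixes Y :: "'b list \<Rightarrow> 'k::field"
  assumes H: "sigH sig"
  shows "act_word sig cx (map Sg w) (iota Y) = iota (act_word (sigV sig) cx' (map Sg w) Y)"
  by (induction w) (simp_all add: pc_iota[OF H])

lemma iota_delta: "iota (delta_vec t :: 'b list \<Rightarrow> 'k::field) = delta_vec (map Some t)"
proof
  fix u
  show "iota (delta_vec t :: 'b list \<Rightarrow> 'k) u = delta_vec (map Some t) u"
  proof (cases "None \<in> set u")
    case True
    then have "u \<noteq> map Some t" by auto
    then show ?thesis using True by (simp add: iota_def delta_vec_def)
  next
    case False
    define v where "v = map the u"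
    have u: "u = map Some v" unfolding v_def by (rule map_the_Some[OF False, symmetric])
    have "(map Some v = map Some t) = (v = t)" by (rule inj_map_eq_map) simp
    then show ?thesis unfolding u iota_Some delta_vec_def by simp
  qed
qed

lemma crow_sigV:
  assumes "crow sig"
  shows "crow (sigV sig)"
  unfolding crow_def
proof
  fix p
  have eq: "{q. sigV sig p q \<noteq> 0} = (\<lambda>q. (Some (fst q), Some (snd q))) -` {q. sig (Some (fst p), Some (snd p)) q \<noteq> 0}"
    by (auto simp: sigV_def)
  have inj: "inj (\<lambda>q. (Some (fst q), Some (snd q)))" by (rule injI) (auto simp: prod_eq_iff)
  have fin: "finite {q. sig (Some (fst p), Some (snd p)) q \<noteq> 0}" using assms unfolding crow_def by blast
  show "finite {q. sigV sig p q \<noteq> 0}" unfolding eq by (rule finite_vimageI[OF fin inj])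
qed

lemma braid3_sigV:
  fixes sig :: "'b option \<times> 'b option \<Rightarrow> 'b option \<times> 'b option \<Rightarrow> 'k::field"
  assumes H: "sigH sig" and B: "braid3 sig"
  shows "braid3 (sigV sig)"
  unfolding braid3_def
proof (intro allI impI)
  fix t :: "'b list" assume t: "length t = 3"
  have "iota (lin_ext (pos_coef 1 (sigV sig)) (lin_ext (pos_coef 2 (sigV sig)) (lin_ext (pos_coef 1 (sigV sig)) (delta_vec t))))
     = lin_ext (pos_coef 1 sig) (lin_ext (pos_coef 2 sig) (lin_ext (pos_coef 1 sig) (delta_vec (map Some t))))"
    by (simp add: pc_iota[OF H, symmetric] iota_delta)
  also have "\<dots> = lin_ext (pos_coef 2 sig) (lin_ext (pos_coef 1 sig) (lin_ext (pos_coef 2 sig) (delta_vec (map Some t))))"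
    using B t unfolding braid3_def by simp
  also have "\<dots> = iota (lin_ext (pos_coef 2 (sigV sig)) (lin_ext (pos_coef 1 (sigV sig)) (lin_ext (pos_coef 2 (sigV sig)) (delta_vec t))))"
    by (simp add: pc_iota[OF H, symmetric] iota_delta)
  finally show "lin_ext (pos_coef 1 (sigV sig)) (lin_ext (pos_coef 2 (sigV sig)) (lin_ext (pos_coef 1 (sigV sig)) (delta_vec t))) =
         lin_ext (pos_coef 2 (sigV sig)) (lin_ext (pos_coef 1 (sigV sig)) (lin_ext (pos_coef 2 (sigV sig)) (delta_vec t)))"
    by (rule iota_inj)
qed



section \<open>Words containing xi\<close>

definition noneZ :: "('b option list \<Rightarrow> 'k::zero) \<Rightarrow> bool" where
  "noneZ Y \<longleftrightarrow> (\<forall>u. None \<notin> set u \<longrightarrow> Y u = 0)"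

definition sigU :: "('b option \<times> 'b option \<Rightarrow> 'b option \<times> 'b option \<Rightarrow> 'k::zero_neq_one) \<Rightarrow> bool" where
  "sigU sig \<longleftrightarrow> (\<forall>a. sig (None, a) = delta_vec (a, None) \<and> sig (a, None) = delta_vec (None, a))"

lemma sig_unit_nz:
  assumes U: "sigU sig" and nz: "sig (x, y) (c, d) \<noteq> 0" and cd: "c \<noteq> None" "d \<noteq> None"
  shows "x \<noteq> None \<and> y \<noteq> None"
proof (intro conjI notI)
  assume "x = None"
  then have "sig (x, y) = delta_vec (y, None)" using U unfolding sigU_def by simp
  then have "(c, d) = (y, None)" using nz by (simp add: delta_vec_def split: if_splits)
  then show False using cd by simp
next
  assume "y = None"
  then have "sig (x, y) = delta_vec (None, x)" using U unfolding sigU_def by simp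
  then have "(c, d) = (None, x)" using nz by (simp add: delta_vec_def split: if_splits)
  then show False using cd by simp
qed

lemma noneZ_pos:
  fixes Y :: "'b option list \<Rightarrow> 'k::field"
  assumes U: "sigU sig" and Y: "noneZ Y"
  shows "noneZ (lin_ext (pos_coef i sig) Y)"
  unfolding noneZ_def
proof (intro allI impI)
  fix u :: "'b option list" assume u: "None \<notin> set u"
  show "lin_ext (pos_coef i sig) Y u = 0"
  proof (rule ccontr)
    assume "lin_ext (pos_coef i sig) Y u \<noteq> 0"
    then have "\<exists>w. Y w \<noteq> 0 \<and> pos_coef i sig w u \<noteq> 0" by (rule lin_ext_nz)
    then obtain w where w: "Y w \<noteq> 0" "pos_coef i sig w u \<noteq> 0" by (elim exE conjE)
    from pos_coef_nz[OF w(2)] have h: "1 \<le> i" "i < length w" "length u = length w"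
      "\<forall>j<length w. j \<noteq> i - 1 \<and> j \<noteq> i \<longrightarrow> u ! j = w ! j"
      "sig (w ! (i - 1), w ! i) (u ! (i - 1), u ! i) \<noteq> 0" by auto
    have "u ! (i - 1) \<in> set u" "u ! i \<in> set u" using h by simp_all
    then have "u ! (i - 1) \<noteq> None" "u ! i \<noteq> None" using u by (metis, metis)
    then have wi: "w ! (i - 1) \<noteq> None \<and> w ! i \<noteq> None" using sig_unit_nz[OF U h(5)] by blast
    have "None \<notin> set w"
    proof
      assume "None \<in> set w"
      then obtain k where k: "k < length w" "w ! k = None" by (metis in_set_conv_nth)
      show False
      proof (cases "k = i - 1 \<or> k = i")
        case True then show False using wi k by auto
      next
        case False
        then have "u ! k = None" using h k by auto
        moreover have "u ! k \<in> set u" using h k by simp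
        ultimately show False using u by simp
      qed
    qed
    then have "Y w = 0" using Y unfolding noneZ_def by blast
    then show False using w by simp
  qed
qed

lemma noneZ_xi:
  fixes Y :: "'b option list \<Rightarrow> 'k::field"
  shows "noneZ (lin_ext (pos_coef i (sigma_m mu)) Y)"
  unfolding noneZ_def
proof (intro allI impI)
  fix u :: "'b option list" assume u: "None \<notin> set u"
  show "lin_ext (pos_coef i (sigma_m mu)) Y u = 0"
  proof (rule ccontr)
    assume "lin_ext (pos_coef i (sigma_m mu)) Y u \<noteq> 0"
    then have "\<exists>w. Y w \<noteq> 0 \<and> pos_coef i (sigma_m mu) w u \<noteq> 0" by (rule lin_ext_nz)
    then obtain w where w: "pos_coef i (sigma_m mu) w u \<noteq> 0" by blast
    from pos_coef_nz[OF w] have h: "1 \<le> i" "i < length w" "length u = length w"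
      "sigma_m mu (w ! (i - 1), w ! i) (u ! (i - 1), u ! i) \<noteq> 0" by auto
    then have "u ! (i - 1) = None" by (simp add: sigma_m_def split: if_splits)
    moreover have "u ! (i - 1) \<in> set u" using h by simp
    ultimately show False using u by simp
  qed
qed

definition hasXi :: "gen list \<Rightarrow> bool" where
  "hasXi ws \<longleftrightarrow> (\<exists>j. Xi j \<in> set ws)"

lemma act_hasXi:
  fixes Y :: "'b option list \<Rightarrow> 'k::field"
  assumes U: "sigU sig"
  shows "hasXi ws \<Longrightarrow> noneZ (act_word sig (sigma_m mu) ws Y)"
proof (induction ws)
  case Nil then show ?case by (simp add: hasXi_def)
next
  case (Cons g ws)
  show ?case
  proof (cases g)
    case (Sg k)
    then have "hasXi ws" using Cons.prems by (auto simp: hasXi_def)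
    then show ?thesis using Cons.IH Sg by (simp add: noneZ_pos[OF U])
  next
    case (Xi k)
    then show ?thesis by (simp add: noneZ_xi)
  qed
qed

section \<open>Filtering the xi-free part of Q\<close>

abbreviation "PX \<equiv> (\<lambda>ws. \<not> hasXi ws)"

lemma hasXi_append: "hasXi (a @ b) \<longleftrightarrow> hasXi a \<or> hasXi b"
  by (auto simp: hasXi_def)

lemma hasXi_map_Sg: "\<not> hasXi (map Sg w)"
  by (auto simp: hasXi_def)

lemma fmult_Cons: "fmult (a # A) B = map (\<lambda>b. a @ b) B @ fmult A B"
  by (simp add: fmult_def)

lemma fmult_Nil: "fmult [] B = []"
  by (simp add: fmult_def)

lemma filter_fmult: "filter PX (fmult A B) = fmult (filter PX A) (filter PX B)"
proof (induction A)
  case Nil then show ?case by (simp add: fmult_Nil)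
next
  case (Cons a A)
  have "filter PX (map (\<lambda>b. a @ b) B) = (if PX a then map (\<lambda>b. a @ b) (filter PX B) else [])"
    by (induction B) (auto simp: hasXi_append)
  then show ?case using Cons by (simp add: fmult_Cons fmult_Nil)
qed

lemma filter_foldr_fmult:
  "(\<And>k. k \<in> set ks \<Longrightarrow> filter PX (G k) = [g k]) \<Longrightarrow>
   filter PX (foldr (\<lambda>k acc. fmult (G k) acc) ks [[]]) = [concat (map g ks)]"
proof (induction ks)
  case Nil then show ?case by (simp add: hasXi_def)
next
  case (Cons k ks)
  have ih: "filter PX (foldr (\<lambda>k acc. fmult (G k) acc) ks [[]]) = [concat (map g ks)]"
    using Cons by auto
  have "filter PX (foldr (\<lambda>k acc. fmult (G k) acc) (k # ks) [[]]) =
        fmult (filter PX (G k)) (filter PX (foldr (\<lambda>k acc. fmult (G k) acc) ks [[]]))"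
    by (simp add: filter_fmult)
  also have "\<dots> = fmult [g k] [concat (map g ks)]" using ih Cons.prems by simp
  also have "\<dots> = [concat (map g (k # ks))]" by (simp add: fmult_def)
  finally show ?case .
qed

lemma filter_Ffac:
  assumes "tk n \<sigma> k = 0 \<or> tk n \<sigma> k \<le> k"
  shows "filter PX (Ffac n \<sigma> k) = [map Sg (blk (tk n \<sigma>) k)]"
proof (cases "tk n \<sigma> k = 0")
  case True then show ?thesis by (simp add: Ffac_def Let_def blk_def hasXi_def)
next
  case False
  define t where "t = tk n \<sigma> k"
  define rest where "rest = map Sg [Suc t..<Suc k]"
  have le: "t \<le> k" using assms False unfolding t_def by simp
  then have up: "map Sg [t..<Suc k] = [Sg t] @ rest" unfolding rest_def by (simp add: upt_conv_Cons)
  have h1: "\<not> hasXi ([Sg t] @ rest)" unfolding rest_def by (auto simp: hasXi_def)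
  have h2: "hasXi (map Sg [1..<t] @ [Xi t] @ rest)" by (auto simp: hasXi_def)
  have F: "Ffac n \<sigma> k = (if Suc t = tk n \<sigma> (Suc k) then [[Sg t] @ rest]
             else [[Sg t] @ rest, map Sg [1..<t] @ [Xi t] @ rest])"
    unfolding Ffac_def Let_def t_def[symmetric] rest_def[symmetric] using False unfolding t_def by simp
  have B: "blk (tk n \<sigma>) k = [t..<Suc k]" using False unfolding blk_def t_def by simp
  show ?thesis unfolding F B up using h1 h2 by simp
qed

lemma concat_map_single:
  "distinct xs \<Longrightarrow> (\<And>j. j \<in> set xs \<Longrightarrow> j \<noteq> k \<Longrightarrow> f j = []) \<Longrightarrow>
   concat (map f xs) = (if k \<in> set xs then f k else [])"
proof (induction xs)
  case Nil then show ?case by simp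
next
  case (Cons x xs)
  then show ?case by (cases "x = k") auto
qed

definition single :: "nat \<Rightarrow> nat \<Rightarrow> nat \<Rightarrow> nat" where
  "single k t = (\<lambda>j. if j = k then t else 0)"

lemma tk_bfac:
  assumes v: "valid_ts n ts" and k: "1 \<le> k" "k < n"
  shows "tk n (bfac ts k) = single k (ts k)"
proof -
  have vs: "valid_ts n (single k (ts k))" using v k unfolding valid_ts_def single_def by auto
  have "bw n (single k (ts k)) = blk (single k (ts k)) k" unfolding bw_def
    by (subst concat_map_single[of _ k]) (use k in \<open>auto simp: blk_def single_def\<close>)
  also have "\<dots> = blk ts k" by (simp add: blk_def single_def)
  finally have "bubble n (single k (ts k)) = bfac ts k" by (metis permword_bw permword_blk)
  then show ?thesis using tk_bubble[OF vs] by simp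
qed

lemma filter_Fgvb:
  assumes s: "\<sigma> permutes {1..n}" and k: "1 \<le> k" "k < n"
  shows "filter PX (Fgvb n (bcomp n \<sigma> k)) = [map Sg (blk (tk n \<sigma>) k)]"
proof -
  define ts where "ts = tk n \<sigma>"
  have v: "valid_ts n ts" using tk_props[OF s] unfolding ts_def by simp
  have tk1: "tk n (bcomp n \<sigma> k) = single k (ts k)" unfolding bcomp_def ts_def[symmetric]
    by (rule tk_bfac[OF v k])
  have vs: "valid_ts n (single k (ts k))" using v k unfolding valid_ts_def single_def by auto
  have "filter PX (Fgvb n (bcomp n \<sigma> k)) = [concat (map (\<lambda>j. map Sg (blk (single k (ts k)) j)) (rev [1..<n]))]"
    unfolding Fgvb_def
  proof (rule filter_foldr_fmult)
    fix j assume "j \<in> set (rev [1..<n])"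
    have "tk n (bcomp n \<sigma> k) j = 0 \<or> tk n (bcomp n \<sigma> k) j \<le> j"
      using vs unfolding tk1 valid_ts_def by auto
    then show "filter PX (Ffac n (bcomp n \<sigma> k) j) = [map Sg (blk (single k (ts k)) j)]"
      using filter_Ffac[of n "bcomp n \<sigma> k" j] unfolding tk1 by simp
  qed
  also have "concat (map (\<lambda>j. map Sg (blk (single k (ts k)) j)) (rev [1..<n])) = map Sg (blk ts k)"
    by (subst concat_map_single[of _ k]) (use k in \<open>auto simp: blk_def single_def\<close>)
  finally show ?thesis unfolding ts_def .
qed

lemma bfac_shuf:
  assumes v: "valid_ts n ts" and K: "1 \<le> K" "K < n"
  shows "bfac ts K \<in> shufset n 0 K 1"
proof (cases "ts K = 0")
  case True
  then show ?thesis by (simp add: bfac_def shufset_def)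
next
  case False
  define t where "t = ts K"
  have t: "1 \<le> t" "t \<le> K" using False v K unfolding t_def valid_ts_def by auto
  define b where "b = cyc t K"
  have bK: "b permutes {1..Suc K}" unfolding b_def by (rule cyc_permutes) (use t in auto)
  have bn: "b permutes {1..n}" by (rule permutes_subset[OF bK]) (use K in auto)
  have bf: "b x = x" if "x \<notin> {0 + 1..0 + K + 1}" for x
    using permutes_not_in[OF bK, of x] that by auto
  have binv: "inv b a = (if a < t then a else Suc a)" if "1 \<le> a" "a \<le> K" for a
  proof -
    have "b (if a < t then a else Suc a) = a"
      unfolding b_def using cyc_formula[of t K] t that by auto
    then show ?thesis using permutes_inverses(2)[OF bK, of "if a < t then a else Suc a"] by simp
  qed
  have mono: "inv b a < inv b c" if "0 + 1 \<le> a" "a < c" "c \<le> 0 + K" for a c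
    using binv[of a] binv[of c] that by auto
  show ?thesis unfolding shufset_def bfac_def using False bn bf mono unfolding t_def[symmetric] b_def
    by auto
qed

lemma lv_map_Sg: "lv (map Sg w) = 0"
  by (simp add: lv_def)

lemma concat_map_filter_nil:
  "(\<And>x. x \<in> set T \<Longrightarrow> \<not> P x \<Longrightarrow> f x = []) \<Longrightarrow> concat (map f T) = concat (map f (filter P T))"
  by (induction T) auto

lemma filter_map_app: "\<not> hasXi \<tau> \<Longrightarrow> filter PX (map (\<lambda>w. w @ \<tau>) L) = map (\<lambda>w. w @ \<tau>) (filter PX L)"
  by (induction L) (auto simp: hasXi_append)

lemma filter_Qrec:
  assumes s: "\<sigma> permutes {1..n}"
  shows "k < n \<Longrightarrow> filter PX (Qrec n \<sigma> k) = [map Sg (bw (Suc k) (tk n \<sigma>))]"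
proof (induction k)
  case 0 then show ?case by (simp add: bw_le1 hasXi_def)
next
  case (Suc k)
  define ts where "ts = tk n \<sigma>"
  have v: "valid_ts n ts" using tk_props[OF s] unfolding ts_def by simp
  define \<tau>0 where "\<tau>0 = map Sg (bw (Suc k) ts)"
  have IH: "filter PX (Qrec n \<sigma> k) = [\<tau>0]" using Suc unfolding \<tau>0_def ts_def by simp
  define \<sigma>' where "\<sigma>' = bcomp n \<sigma> (Suc k)"
  define \<phi> where "\<phi> = (\<lambda>\<tau>. if lv \<tau> < Suc k \<and> \<sigma>' \<in> shufset n (lv \<tau>) (Suc k - lv \<tau>) 1
      then map (\<lambda>w. w @ \<tau>) (Fgvb n \<sigma>') else [])"
  have Q: "Qrec n \<sigma> (Suc k) = concat (map \<phi> (Qrec n \<sigma> k))"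
    unfolding \<phi>_def \<sigma>'_def by (simp add: Mgvb_def)
  have z: "filter PX (\<phi> \<tau>) = []" if "\<not> PX \<tau>" for \<tau>
    using that unfolding \<phi>_def by (auto simp: filter_empty_conv hasXi_append)
  have "filter PX (Qrec n \<sigma> (Suc k)) = concat (map (filter PX \<circ> \<phi>) (Qrec n \<sigma> k))"
    unfolding Q filter_concat by simp
  also have "\<dots> = concat (map (filter PX \<circ> \<phi>) (filter PX (Qrec n \<sigma> k)))"
    by (rule concat_map_filter_nil) (simp add: z)
  also have "\<dots> = filter PX (\<phi> \<tau>0)" unfolding IH by simp
  also have "\<phi> \<tau>0 = map (\<lambda>w. w @ \<tau>0) (Fgvb n \<sigma>')"
  proof -
    have "\<sigma>' \<in> shufset n 0 (Suc k) 1" unfolding \<sigma>'_def bcomp_def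
      by (rule bfac_shuf[OF tk_props[OF s, THEN conjunct1]]) (use Suc in auto)
    then show ?thesis unfolding \<phi>_def \<tau>0_def by (simp add: lv_map_Sg)
  qed
  also have "filter PX (map (\<lambda>w. w @ \<tau>0) (Fgvb n \<sigma>')) = map (\<lambda>w. w @ \<tau>0) (filter PX (Fgvb n \<sigma>'))"
    by (rule filter_map_app) (simp add: \<tau>0_def hasXi_map_Sg)
  also have "filter PX (Fgvb n \<sigma>') = [map Sg (blk ts (Suc k))]"
    unfolding \<sigma>'_def ts_def by (rule filter_Fgvb[OF s]) (use Suc in auto)
  finally show ?case unfolding \<tau>0_def ts_def[symmetric] by (simp add: bw_Suc)
qed



lemma sum_list_filter0:
  "(\<And>x. x \<in> set xs \<Longrightarrow> \<not> P x \<Longrightarrow> f x = (0::'k::comm_monoid_add)) \<Longrightarrow>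
   sum_list (map f xs) = sum_list (map f (filter P xs))"
  by (induction xs) auto

lemma sum_list_nz: "sum_list (map f xs) \<noteq> (0::'k::comm_monoid_add) \<Longrightarrow> \<exists>x\<in>set xs. f x \<noteq> 0"
  by (induction xs) auto

lemma iota_len:
  "(\<And>w. y w \<noteq> 0 \<Longrightarrow> length w = k) \<Longrightarrow> iota y u \<noteq> 0 \<Longrightarrow> length u = k"
proof -
  assume y: "\<And>w. y w \<noteq> 0 \<Longrightarrow> length w = k" and nz: "iota y u \<noteq> 0"
  then have "y (map the u) \<noteq> 0" unfolding iota_def by (auto split: if_splits)
  then have "length (map the u) = k" by (rule y)
  then show "length u = k" by simp
qed

lemma Qact_len:
  fixes Y :: "'b option list \<Rightarrow> 'k::field"
  assumes Y: "\<And>w. Y w \<noteq> 0 \<Longrightarrow> length w = k" and nz: "Qact sig mu k Y u \<noteq> 0"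
  shows "length u = k"
proof -
  have "(\<Sum>\<sigma>\<in>{\<sigma>. \<sigma> permutes {1..k}}. sum_list (map (\<lambda>\<tau>. act_word sig (sigma_m mu) \<tau> Y u) (Qgvb k \<sigma>))) \<noteq> 0"
    using nz unfolding Qact_def .
  then obtain \<sigma> where "sum_list (map (\<lambda>\<tau>. act_word sig (sigma_m mu) \<tau> Y u) (Qgvb k \<sigma>)) \<noteq> 0"
    by (rule sum.not_neutral_contains_not_neutral)
  then have "\<exists>\<tau>\<in>set (Qgvb k \<sigma>). act_word sig (sigma_m mu) \<tau> Y u \<noteq> 0" by (rule sum_list_nz)
  then obtain \<tau> where nz\<tau>: "act_word sig (sigma_m mu) \<tau> Y u \<noteq> 0" by blast
  show ?thesis by (rule act_len[OF Y nz\<tau>])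
qed

lemma filter_map_Some: "filter (\<lambda>a. a \<noteq> None) (map Some v) = map Some v"
  by (induction v) auto

lemma Ddel_eq:
  fixes X :: "'b option list \<Rightarrow> 'k::field"
  assumes X: "\<And>w. X w \<noteq> 0 \<Longrightarrow> length w = N" and v: "length v = N"
  shows "Ddel X v = X (map Some v)"
proof -
  define S where "S = {w. X w \<noteq> 0 \<and> map the (filter (\<lambda>a. a \<noteq> None) w) = v}"
  have sub: "S \<subseteq> {map Some v}"
  proof
    fix w assume w: "w \<in> S"
    then have Xw: "X w \<noteq> 0" and e: "map the (filter (\<lambda>a. a \<noteq> None) w) = v" unfolding S_def by auto
    have lw: "length w = N" by (rule X[OF Xw])
    have "length (filter (\<lambda>a. a \<noteq> None) w) = length w" using e v lw by (metis length_map)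
    then have nn: "None \<notin> set w" using length_filter_less[of None w "\<lambda>a. a \<noteq> None"] by auto
    then have "filter (\<lambda>a. a \<noteq> None) w = w" by (intro filter_True ballI notI) simp
    then have "map the w = v" using e by simp
    then have "w = map Some v" using map_the_Some[OF nn] by simp
    then show "w \<in> {map Some v}" by simp
  qed
  have "Ddel X v = sum X S" unfolding Ddel_def S_def ..
  also have "\<dots> = X (map Some v)"
  proof (cases "map Some v \<in> S")
    case True
    then have "S = {map Some v}" using sub by auto
    then show ?thesis by simp
  next
    case False
    then have "S = {}" using sub by auto
    moreover have "X (map Some v) = 0" using False unfolding S_def by (simp add: filter_map_Some comp_def)
    ultimately show ?thesis by simp
  qed
  finally show ?thesis .
qed

lemma Ddel_zero:
  fixes X :: "'b option list \<Rightarrow> 'k::field"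
  assumes X: "\<And>w. X w \<noteq> 0 \<Longrightarrow> length w = k" and v: "k < length v"
  shows "Ddel X v = 0"
proof -
  have e: "{w. X w \<noteq> 0 \<and> map the (filter (\<lambda>a. a \<noteq> None) w) = v} = {}"
  proof (rule ccontr)
    assume "{w. X w \<noteq> 0 \<and> map the (filter (\<lambda>a. a \<noteq> None) w) = v} \<noteq> {}"
    then obtain w where w: "X w \<noteq> 0" "map the (filter (\<lambda>a. a \<noteq> None) w) = v" by blast
    have "length v \<le> length w" using w(2) length_filter_le[of "\<lambda>a. a \<noteq> None" w] by (metis length_map)
    moreover have "length w = k" by (rule X[OF w(1)])
    ultimately show False using v by simp
  qed
  show ?thesis unfolding Ddel_def e by (rule sum.empty)
qed

lemma act_zero: "act_word c cx ws (\<lambda>_. 0 :: 'k::field) = (\<lambda>_. 0)"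
  by (induction ws) (simp_all add: lin_ext_zero)

lemma crow_zero: "crow (\<lambda>_ _. 0 :: 'k::field)"
  by (simp add: crow_def)

lemma main_eq:
  fixes sig :: "'b option \<times> 'b option \<Rightarrow> 'b option \<times> 'b option \<Rightarrow> 'k::field"
    and mu :: "'b option \<times> 'b option \<Rightarrow> 'b option \<Rightarrow> 'k"
    and y :: "'b list \<Rightarrow> 'k"
  assumes BU: "braided_unital_setting sig mu" and y: "fsupp y" "\<And>w. y w \<noteq> 0 \<Longrightarrow> length w = n"
    and n: "1 \<le> n"
  shows "Qact sig mu n (iota y) (map Some v) = Tn sig n y v"
proof -
  have cr: "crow sig" using BU unfolding braided_unital_setting_def crow_def by (elim conjE) assumption
  have br: "braid3 sig" using BU unfolding braided_unital_setting_def braid3_def by (elim conjE) assumption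
  have U: "sigU sig" using BU unfolding braided_unital_setting_def sigU_def by (elim conjE) assumption
  have H: "sigH sig" using BU unfolding braided_unital_setting_def sigH_def by (elim conjE) assumption
  have crV: "crow (sigV sig)" by (rule crow_sigV[OF cr])
  have brV: "braid3 (sigV sig)" by (rule braid3_sigV[OF H br])
  let ?P = "{\<sigma>. \<sigma> permutes {1..n}}"
  have "Qact sig mu n (iota y) (map Some v) =
      (\<Sum>\<sigma>\<in>?P. sum_list (map (\<lambda>\<tau>. act_word sig (sigma_m mu) \<tau> (iota y) (map Some v)) (Qgvb n \<sigma>)))"
    unfolding Qact_def ..
  also have "\<dots> = (\<Sum>\<sigma>\<in>?P. act_word (sigV sig) (\<lambda>_ _. 0) (map Sg (bw n (tk n \<sigma>))) y v)"
  proof (rule sum.cong[OF refl])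
    fix \<sigma> assume s: "\<sigma> \<in> ?P"
    then have sp: "\<sigma> permutes {1..n}" by simp
    have "sum_list (map (\<lambda>\<tau>. act_word sig (sigma_m mu) \<tau> (iota y) (map Some v)) (Qgvb n \<sigma>)) =
          sum_list (map (\<lambda>\<tau>. act_word sig (sigma_m mu) \<tau> (iota y) (map Some v)) (filter PX (Qgvb n \<sigma>)))"
    proof (rule sum_list_filter0)
      fix \<tau> assume "\<not> PX \<tau>"
      then have "noneZ (act_word sig (sigma_m mu) \<tau> (iota y))" using act_hasXi[OF U] by simp
      then show "act_word sig (sigma_m mu) \<tau> (iota y) (map Some v) = 0" unfolding noneZ_def by auto
    qed
    also have "filter PX (Qgvb n \<sigma>) = [map Sg (bw n (tk n \<sigma>))]"
      using filter_Qrec[OF sp, of "n - 1"] n unfolding Qgvb_def by simp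
    also have "sum_list (map (\<lambda>\<tau>. act_word sig (sigma_m mu) \<tau> (iota y) (map Some v)) [map Sg (bw n (tk n \<sigma>))])
        = act_word sig (sigma_m mu) (map Sg (bw n (tk n \<sigma>))) (iota y) (map Some v)" by simp
    also have "\<dots> = iota (act_word (sigV sig) (\<lambda>_ _. 0) (map Sg (bw n (tk n \<sigma>))) y) (map Some v)"
      by (simp only: act_iota[OF H, where cx'="\<lambda>_ _. 0"])
    also have "\<dots> = act_word (sigV sig) (\<lambda>_ _. 0) (map Sg (bw n (tk n \<sigma>))) y v"
      by (rule iota_Some)
    finally show "sum_list (map (\<lambda>\<tau>. act_word sig (sigma_m mu) \<tau> (iota y) (map Some v)) (Qgvb n \<sigma>)) =
        act_word (sigV sig) (\<lambda>_ _. 0) (map Sg (bw n (tk n \<sigma>))) y v" .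
  qed
  also have "\<dots> = (\<Sum>\<sigma>\<in>?P. act_word (sigV sig) (\<lambda>_ _. 0) (map Sg (SOME is. reduced_word n \<sigma> is)) y v)"
  proof (rule sum.cong[OF refl])
    fix \<sigma> assume s: "\<sigma> \<in> ?P"
    then have sp: "\<sigma> permutes {1..n}" by simp
    have "reduced_word n \<sigma> (SOME is. reduced_word n \<sigma> is)"
      using reduced_exists[OF sp] by (rule someI_ex)
    then have "beq n (SOME is. reduced_word n \<sigma> is) (bw n (tk n \<sigma>))" by (rule reduced_beq[OF sp])
    then have "act_word (sigV sig) (\<lambda>_ _. 0) (map Sg (SOME is. reduced_word n \<sigma> is)) y =
               act_word (sigV sig) (\<lambda>_ _. 0) (map Sg (bw n (tk n \<sigma>))) y"
      by (rule beq_act[OF crV crow_zero brV _ y(1) y(2)])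
    then show "act_word (sigV sig) (\<lambda>_ _. 0) (map Sg (bw n (tk n \<sigma>))) y v =
               act_word (sigV sig) (\<lambda>_ _. 0) (map Sg (SOME is. reduced_word n \<sigma> is)) y v" by simp
  qed
  also have "\<dots> = Tn sig n y v" unfolding Tn_def ..
  finally show ?thesis .
qed



theorem lemma5:
  fixes sig :: "'b option \<times> 'b option \<Rightarrow> 'b option \<times> 'b option \<Rightarrow> 'k::field"
    and mu :: "'b option \<times> 'b option \<Rightarrow> 'b option \<Rightarrow> 'k"
    and n :: nat
    and x :: "'b list \<Rightarrow> 'k"
  assumes "braided_unital_setting sig mu"
    and "n \<ge> 2"
    and "finite {w. x w \<noteq> 0}"
    and "\<forall>w. x w \<noteq> 0 \<longrightarrow> length w \<le> n"
    and "\<forall>v. QS sig mu x v = 0"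
  shows "\<forall>v. Tn sig n (deg n x) v = 0"
proof
  fix v
  note BU = assms(1)
  have n1: "1 \<le> n" using assms(2) by simp
  have degsupp: "\<And>w. deg k x w \<noteq> 0 \<Longrightarrow> length w = k" for k
    unfolding deg_def by (auto split: if_splits)
  have degfin: "fsupp (deg k x)" for k
  proof -
    have "{w. deg k x w \<noteq> 0} \<subseteq> {w. x w \<noteq> 0}" unfolding deg_def by auto
    then show ?thesis unfolding fsupp_def using assms(3) by (rule finite_subset)
  qed
  define y where "y = deg n x"
  have ysupp: "\<And>w. y w \<noteq> 0 \<Longrightarrow> length w = n" unfolding y_def by (rule degsupp)
  have yfin: "fsupp y" unfolding y_def by (rule degfin)
  have "Tn sig n y v = 0"
  proof (cases "length v = n")
    case False
    show ?thesis unfolding Tn_def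
    proof (rule sum.neutral, rule ballI)
      fix s assume "s \<in> {s. s permutes {1..n}}"
      show "act_word (sigV sig) (\<lambda>_ _. 0) (map Sg (SOME is. reduced_word n s is)) y v = 0"
      proof (rule ccontr)
        assume nz: "act_word (sigV sig) (\<lambda>_ _. 0) (map Sg (SOME is. reduced_word n s is)) y v \<noteq> 0"
        have "length v = n" by (rule act_len[OF ysupp nz])
        then show False using False by simp
      qed
    qed
  next
    case True
    define L where "L = length ` {w. x w \<noteq> 0}"
    have finL: "finite L" unfolding L_def using assms(3) by simp
    have terms: "QSn sig mu k (deg k x) v = (if k = n then QSn sig mu n (deg n x) v else 0)" if k: "k \<in> L" for k
    proof (cases "k = n")
      case True then show ?thesis by simp
    next
      case False
      obtain w where w: "x w \<noteq> 0" "length w = k" using k unfolding L_def by blast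
      have "k \<le> n" using assms(4) w by auto
      then have kn: "k < length v" using False True by simp
      have Y: "\<And>u. iota (deg k x) u \<noteq> 0 \<Longrightarrow> length u = k" by (rule iota_len[OF degsupp])
      have X: "\<And>u. Qact sig mu k (iota (deg k x)) u \<noteq> 0 \<Longrightarrow> length u = k" by (rule Qact_len[OF Y])
      have "QSn sig mu k (deg k x) v = 0" unfolding QSn_def by (rule Ddel_zero[OF X kn])
      then show ?thesis using False by simp
    qed
    have QS: "QS sig mu x v = (if n \<in> L then QSn sig mu n (deg n x) v else 0)"
    proof -
      have "QS sig mu x v = (\<Sum>k\<in>L. QSn sig mu k (deg k x) v)" unfolding QS_def L_def ..
      also have "\<dots> = (\<Sum>k\<in>L. if k = n then QSn sig mu n (deg n x) v else 0)"
        by (rule sum.cong[OF refl]) (rule terms)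
      also have "\<dots> = (if n \<in> L then QSn sig mu n (deg n x) v else 0)"
        by (rule sum.delta[OF finL])
      finally show ?thesis .
    qed
    show ?thesis
    proof (cases "n \<in> L")
      case True
      have Y: "\<And>u. iota y u \<noteq> 0 \<Longrightarrow> length u = n" by (rule iota_len[OF ysupp])
      have X: "\<And>u. Qact sig mu n (iota y) u \<noteq> 0 \<Longrightarrow> length u = n" by (rule Qact_len[OF Y])
      have "0 = QS sig mu x v" using assms(5) by simp
      also have "\<dots> = QSn sig mu n y v" using QS True unfolding y_def by simp
      also have "\<dots> = Qact sig mu n (iota y) (map Some v)" unfolding QSn_def
        by (rule Ddel_eq[OF X \<open>length v = n\<close>])
      also have "\<dots> = Tn sig n y v" by (rule main_eq[OF BU yfin ysupp n1])
      finally show ?thesis by simp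
    next
      case False
      have y0: "y = (\<lambda>_. 0)"
      proof
        fix w show "y w = 0"
        proof (rule ccontr)
          assume "y w \<noteq> 0"
          then have "x w \<noteq> 0" "length w = n" unfolding y_def deg_def by (auto split: if_splits)
          then have "n \<in> L" unfolding L_def by force
          then show False using False by simp
        qed
      qed
      show ?thesis unfolding Tn_def y0 act_zero by simp
    qed
  qed
  then show "Tn sig n (deg n x) v = 0" unfolding y_def .
qed


end
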